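(* There exists an orthonormal basis $(U_k)_{k\ge1}$ of $L^2_{\mathbb R}((0,2),dx)$ such that for every $x\in(0,1)$, $$\sum_{k=1}^n(U_k^-(x))^2=o\Big(\sum_{k=1}^n(U_k^+(x))^2\Big)\quad\text{as }n\to\infty.$$
   Context: For a real function $u$, $u^{\pm}(x)=\max(0,\pm u(x))$. *)

theory Defs
  imports "HOL-Analysis.Analysis" "HOL-Library.Landau_Symbols"
begin

definition pospart :: "(real \<Rightarrow> real) \<Rightarrow> real \<Rightarrow> real" where
  "pospart u x = max 0 (u x)"

definition negpart :: "(real \<Rightarrow> real) \<Rightarrow> real \<Rightarrow> real" where
  "negpart u x = max 0 (- u x)"

abbreviation I02 :: "real measure" where
  "I02 \<equiv> lebesgue_on {0<..<2}"

definition L2_02 :: "(real \<Rightarrow> real) set" where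
  "L2_02 = {f. f \<in> borel_measurable I02 \<and> integrable I02 (\<lambda>x. (f x)\<^sup>2)}"

definition inner02 :: "(real \<Rightarrow> real) \<Rightarrow> (real \<Rightarrow> real) \<Rightarrow> real" where
  "inner02 f g = integral\<^sup>L I02 (\<lambda>x. f x * g x)"

definition ONB02 :: "(nat \<Rightarrow> real \<Rightarrow> real) \<Rightarrow> bool" where
  "ONB02 U \<longleftrightarrow>
     (\<forall>k\<ge>1. U k \<in> L2_02) \<and>
     (\<forall>i\<ge>1. \<forall>j\<ge>1. inner02 (U i) (U j) = (if i = j then 1 else 0)) \<and>
     (\<forall>f\<in>L2_02. (\<forall>k\<ge>1. inner02 f (U k) = 0) \<longrightarrow> (AE x in I02. f x = 0))"

end

theory Submission
  imports Defs "HOL-Real_Asymp.Real_Asymp"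
begin


abbreviation Om :: "real set" where "Om \<equiv> {0<..<2}"

definition dd :: "nat \<Rightarrow> real" where "dd n = 1 / (real (n+1) * 2^n)"

fun LL :: "nat \<Rightarrow> nat \<Rightarrow> real" where
  "LL 0 j = 1"
| "LL (Suc n) j = LL n (j div 2) + (if odd j then dd (Suc n) else 0)"

definition Js :: "nat \<Rightarrow> nat \<Rightarrow> real set" where
  "Js n j = {real j / 2^n ..< (real j + 1) / 2^n}"
definition Ds :: "nat \<Rightarrow> nat \<Rightarrow> real set" where
  "Ds n j = {LL n j ..< LL n j + dd n}"
definition Dp :: "nat \<Rightarrow> nat \<Rightarrow> real set" where
  "Dp n j = {LL n j ..< LL n j + 2 * dd (Suc n)}"
definition Ps :: "nat \<Rightarrow> nat \<Rightarrow> real set" where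
  "Ps n j = {LL n j + 2 * dd (Suc n) ..< LL n j + dd n}"

datatype nd = Main nat nat | Prim nat nat | Sub real real

fun raw :: "nd \<Rightarrow> real set" where
  "raw (Main n j) = Js n j \<union> Ds n j"
| "raw (Prim n j) = Js n j \<union> Dp n j"
| "raw (Sub a b) = {a..<b}"

definition ns :: "nd \<Rightarrow> real set" where "ns v = raw v \<inter> Om"

fun child :: "nd \<Rightarrow> bool \<Rightarrow> nd" where
  "child (Main n j) c = (if c then Prim n j else Sub (LL n j + 2 * dd (Suc n)) (LL n j + dd n))"
| "child (Prim n j) c = (if c then Main (Suc n) (2*j) else Main (Suc n) (2*j+1))"
| "child (Sub a b) c = (if c then Sub a ((a+b)/2) else Sub ((a+b)/2) b)"

fun valid :: "nd \<Rightarrow> bool" where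
  "valid (Main n j) = (j < 2^n)"
| "valid (Prim n j) = (j < 2^n)"
| "valid (Sub a b) = (1 \<le> a \<and> a < b \<and> b \<le> 2)"

lemma dd_pos: "dd n > 0"
  by (simp add: dd_def)

lemma dd_Suc_eq: "2 * dd (Suc n) = 1 / (real (n+2) * 2^n)"
  unfolding dd_def by (simp add: divide_simps)

lemma dd_Suc: "2 * dd (Suc n) < dd n"
proof -
  have "1 / (real (n+2) * 2^n) < 1 / (real (n+1) * 2^n)"
    by (intro divide_strict_left_mono mult_strict_right_mono) auto
  then show ?thesis by (simp add: dd_Suc_eq dd_def)
qed

lemma LL_bounds: "j < 2^n \<Longrightarrow> 1 \<le> LL n j \<and> LL n j + dd n \<le> 2"
proof (induction n arbitrary: j)
  case 0
  then show ?case by (simp add: dd_def)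
next
  case (Suc n)
  have "j div 2 < 2^n" using Suc.prems by auto
  from Suc.IH[OF this] have ih: "1 \<le> LL n (j div 2)" "LL n (j div 2) + dd n \<le> 2" by auto
  have "LL (Suc n) j + dd (Suc n) \<le> LL n (j div 2) + 2 * dd (Suc n)"
    by (simp add: dd_pos less_imp_le)
  also have "\<dots> \<le> 2" using dd_Suc[of n] ih by linarith
  finally show ?case using ih dd_pos[of "Suc n"] by (simp add: less_imp_le)
qed

lemma Js_sub: "j < 2^n \<Longrightarrow> Js n j \<subseteq> {0..<1}"
proof -
  assume "j < 2^n"
  then have "real j + 1 \<le> 2^n"
    by (metis of_nat_Suc of_nat_le_iff of_nat_numeral of_nat_power Suc_leI add.commute)
  then have "(real j + 1) / 2^n \<le> 1" by (simp add: field_simps)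
  then show ?thesis by (auto simp: Js_def)
qed

lemma valid_child: "valid v \<Longrightarrow> valid (child v c)"
proof (cases v)
  case (Main n j)
  assume "valid v"
  then show ?thesis using Main LL_bounds[of j n] dd_Suc[of n] dd_pos[of "Suc n"]
    by auto
next
  case (Prim n j)
  assume "valid v"
  then show ?thesis using Prim by auto
next
  case (Sub a b)
  assume "valid v"
  then show ?thesis using Sub by auto
qed

lemma LL_even: "LL (Suc n) (2*j) = LL n j" by simp
lemma LL_odd: "LL (Suc n) (2*j+1) = LL n j + dd (Suc n)" by simp

lemma Js_even: "Js (Suc n) (2*j) = {real j / 2^n ..< (real j + 1/2) / 2^n}"
  unfolding Js_def by (rule arg_cong2[where f=atLeastLessThan]) (simp_all add: field_simps)
lemma Js_odd: "Js (Suc n) (2*j+1) = {(real j + 1/2) / 2^n ..< (real j + 1) / 2^n}"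
  unfolding Js_def by (rule arg_cong2[where f=atLeastLessThan]) (simp_all add: field_simps)
lemma ivl01_12: "{0..<1} \<inter> {1..<2::real} = {}" by auto

lemma Ds_sub: "j < 2^n \<Longrightarrow> Ds n j \<subseteq> {1..<2}"
  using LL_bounds[of j n] by (auto simp: Ds_def)
lemma Dp_Ps: "Dp n j \<union> Ps n j = Ds n j" "Dp n j \<inter> Ps n j = {}"
  using dd_Suc[of n] dd_pos[of "Suc n"] by (auto simp: Dp_def Ps_def Ds_def)
lemma Dp_sub: "j < 2^n \<Longrightarrow> Dp n j \<subseteq> {1..<2}"
  using Ds_sub Dp_Ps by blast
lemma Ps_sub: "j < 2^n \<Longrightarrow> Ps n j \<subseteq> {1..<2}"
  using Ds_sub Dp_Ps by blast
lemma Ds_children: "Ds (Suc n) (2*j) \<union> Ds (Suc n) (2*j+1) = Dp n j"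
   "Ds (Suc n) (2*j) \<inter> Ds (Suc n) (2*j+1) = {}"
  using dd_pos[of "Suc n"] by (auto simp: Ds_def Dp_def)
lemma Js_children: "Js (Suc n) (2*j) \<union> Js (Suc n) (2*j+1) = Js n j"
   "Js (Suc n) (2*j) \<inter> Js (Suc n) (2*j+1) = {}"
proof -
  have "real j / 2^n \<le> (real j + 1/2) / 2^n" "(real j + 1/2) / 2^n \<le> (real j + 1) / 2^n"
    by (simp_all add: divide_right_mono)
  then show "Js (Suc n) (2*j) \<union> Js (Suc n) (2*j+1) = Js n j"
   "Js (Suc n) (2*j) \<inter> Js (Suc n) (2*j+1) = {}"
    unfolding Js_even Js_odd by (auto simp: Js_def)
qed

lemma child_un: "valid v \<Longrightarrow> raw (child v True) \<union> raw (child v False) = raw v"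
proof (cases v)
  case (Main n j)
  then show ?thesis using Dp_Ps(1)[of n j] by (auto simp: Ps_def)
next
  case (Prim n j)
  then show ?thesis using Ds_children(1)[of n j] Js_children(1)[of n j] by auto
next
  case (Sub a b)
  assume "valid v"
  then show ?thesis using Sub by auto
qed

lemma child_disj: "valid v \<Longrightarrow> raw (child v True) \<inter> raw (child v False) = {}"
proof (cases v)
  case (Main n j)
  assume "valid v"
  then have "j < 2^n" using Main by simp
  then have "Js n j \<inter> Ps n j = {}" using Js_sub[of j n] Ps_sub[of j n] ivl01_12 by blast
  then show ?thesis using Main Dp_Ps(2)[of n j]
    by (simp add: Ps_def[symmetric] Int_Un_distrib2)
next
  case (Prim n j)
  assume "valid v"
  then have "j < 2^n" using Prim by simp
  then have a: "2*j < 2^Suc n" "2*j+1 < 2^Suc n" by auto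
  have e1: "Js (Suc n) (2*j) \<inter> Ds (Suc n) (2*j+1) = {}"
    using Js_sub[OF a(1)] Ds_sub[OF a(2)] ivl01_12 by blast
  have e2: "Ds (Suc n) (2*j) \<inter> Js (Suc n) (2*j+1) = {}"
    using Js_sub[OF a(2)] Ds_sub[OF a(1)] ivl01_12 by blast
  show ?thesis using Prim Ds_children(2)[of n j] Js_children(2)[of n j] e1 e2
    by (simp add: Int_Un_distrib Int_Un_distrib2 Int_commute)
next
  case (Sub a b)
  then show ?thesis by auto
qed


abbreviation MM :: "real measure" where "MM \<equiv> lebesgue_on Om"

lemma fin_MM: "finite_measure MM"
  by (rule finite_measure_lebesgue_on) simp

lemma emeasure_MM_fin: "emeasure MM A < \<infinity>"
  using finite_measure.emeasure_finite[OF fin_MM] by (simp add: less_top)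

lemma sets_MM: "A \<in> sets lebesgue \<Longrightarrow> A \<subseteq> Om \<Longrightarrow> A \<in> sets MM"
  by (simp add: sets_restrict_space_iff)

lemma measure_MM: "A \<in> sets lebesgue \<Longrightarrow> A \<subseteq> Om \<Longrightarrow> measure MM A = measure lebesgue A"
  by (simp add: measure_restrict_space)

lemma measure_MM_Ioo: "0 \<le> a \<Longrightarrow> a \<le> b \<Longrightarrow> b \<le> 2 \<Longrightarrow> measure MM {a<..<b} = b - a"
  by (subst measure_MM) auto

lemma raw_lebesgue: "raw v \<in> sets lebesgue"
  by (cases v) (auto simp: Js_def Ds_def Dp_def intro!: sets.Un)

lemma ns_lebesgue: "ns v \<in> sets lebesgue"
  unfolding ns_def by (intro sets.Int raw_lebesgue) simp

lemma ns_Om: "ns v \<subseteq> Om"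
  by (auto simp: ns_def)

lemma ns_sets: "ns v \<in> sets MM"
  by (rule sets_MM[OF ns_lebesgue ns_Om])

lemma ns_Int_Om[simp]: "ns v \<inter> Om = ns v"
  using ns_Om by blast

lemma ind_int: "integrable MM (indicator (ns v) :: real \<Rightarrow> real)"
  by (rule integrable_real_indicator[OF ns_sets emeasure_MM_fin])

lemma integral_ind: "A \<subseteq> Om \<Longrightarrow> integral\<^sup>L MM (indicator A) = measure MM A"
  by (simp add: Int_absorb2)

lemma ns_child_un: "valid v \<Longrightarrow> ns (child v True) \<union> ns (child v False) = ns v"
  using child_un[of v] by (auto simp: ns_def)

lemma ns_child_disj: "valid v \<Longrightarrow> ns (child v True) \<inter> ns (child v False) = {}"
  using child_disj[of v] by (auto simp: ns_def)

lemma ns_child_sub: "valid v \<Longrightarrow> ns (child v c) \<subseteq> ns v"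
  using ns_child_un[of v] by (cases c) auto

lemma Js_le1: "j < 2^n \<Longrightarrow> (real j + 1) / 2^n \<le> 1"
proof -
  assume "j < 2^n"
  then have "real j + 1 \<le> 2^n"
    by (metis of_nat_Suc of_nat_le_iff of_nat_numeral of_nat_power Suc_leI add.commute)
  then show ?thesis by (simp add: field_simps)
qed

lemma Js_open: "j < 2^n \<Longrightarrow> {real j / 2^n <..< (real j + 1) / 2^n} \<subseteq> ns (Main n j) \<inter> ns (Prim n j)
   \<and> real j / 2^n < (real j + 1) / 2^n \<and> 0 \<le> real j / 2^n \<and> (real j + 1) / 2^n \<le> 2"
proof -
  assume j: "j < 2^n"
  have a: "(real j + 1) / 2^n \<le> 1" using Js_le1[OF j] .
  have b: "real j / 2^n < (real j + 1) / 2^n" by (simp add: divide_strict_right_mono)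
  have c: "0 \<le> real j / 2^n" by simp
  have "{real j / 2^n <..< (real j + 1) / 2^n} \<subseteq> Js n j" unfolding Js_def by auto
  moreover have "{real j / 2^n <..< (real j + 1) / 2^n} \<subseteq> Om"
  proof (rule subsetI)
    fix x assume x: "x \<in> {real j / 2^n <..< (real j + 1) / 2^n}"
    have "real j / 2^n < x" "x < (real j + 1) / 2^n" using x by simp_all
    then show "x \<in> Om" using a c by (simp only: greaterThanLessThan_iff, intro conjI; linarith)
  qed
  ultimately have "{real j / 2^n <..< (real j + 1) / 2^n} \<subseteq> ns (Main n j) \<inter> ns (Prim n j)"
    unfolding ns_def by auto
  moreover have d: "(real j + 1) / 2^n \<le> 2" using a by linarith
  ultimately show ?thesis using b c by blast
qed

lemma valid_open: "valid w \<Longrightarrow> \<exists>a b. 0 \<le> a \<and> a < b \<and> b \<le> 2 \<and> {a<..<b} \<subseteq> ns w"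
proof (cases w)
  case (Main n j)
  assume "valid w"
  then have "j < 2^n" using Main by simp
  from Js_open[OF this] show ?thesis unfolding Main
    by (intro exI[of _ "real j / 2^n"] exI[of _ "(real j + 1) / 2^n"]) simp
next
  case (Prim n j)
  assume "valid w"
  then have "j < 2^n" using Prim by simp
  from Js_open[OF this] show ?thesis unfolding Prim
    by (intro exI[of _ "real j / 2^n"] exI[of _ "(real j + 1) / 2^n"]) simp
next
  case (Sub a b)
  assume "valid w"
  then show ?thesis using Sub by (intro exI[of _ a] exI[of _ b]) (auto simp: ns_def)
qed

lemma valid_pos: "valid w \<Longrightarrow> measure MM (ns w) > 0"
proof -
  assume "valid w"
  then obtain a b where ab: "0 \<le> a" "a < b" "b \<le> 2" "{a<..<b} \<subseteq> ns w" using valid_open by blast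
  have "measure MM {a<..<b} \<le> measure MM (ns w)"
    using ab(4) ns_sets by (intro finite_measure.finite_measure_mono[OF fin_MM])
  moreover have "measure MM {a<..<b} = b - a" using ab by (intro measure_MM_Ioo) auto
  ultimately show ?thesis using ab(2) by simp
qed

definition mA :: "nd \<Rightarrow> real" where "mA v = measure MM (ns (child v True))"
definition mB :: "nd \<Rightarrow> real" where "mB v = measure MM (ns (child v False))"
definition c1 :: "nd \<Rightarrow> real" where "c1 v = sqrt (mB v / (mA v * (mA v + mB v)))"
definition c2 :: "nd \<Rightarrow> real" where "c2 v = sqrt (mA v / (mB v * (mA v + mB v)))"
definition hf :: "nd \<Rightarrow> real \<Rightarrow> real" where
  "hf v x = c1 v * indicator (ns (child v True)) x - c2 v * indicator (ns (child v False)) x"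

lemma mAB_pos: "valid v \<Longrightarrow> mA v > 0 \<and> mB v > 0"
  unfolding mA_def mB_def using valid_pos valid_child by blast

lemma c_nonneg: "c1 v \<ge> 0" "c2 v \<ge> 0"
  unfolding c1_def c2_def by (simp_all add: measure_nonneg mA_def mB_def)

lemma sq_aux: "a > 0 \<Longrightarrow> b > 0 \<Longrightarrow> (sqrt (b / (a * (a + b))))^2 = b / (a * (a + b))"
  by (simp add: real_sqrt_pow2)

lemma bal_aux: "a > 0 \<Longrightarrow> b > 0 \<Longrightarrow> sqrt (b / (a * (a + b))) * a = sqrt (a / (b * (a + b))) * b"
proof -
  assume a: "a > 0" and b: "b > 0"
  have "sqrt (b / (a * (a + b))) * a = sqrt (b / (a * (a + b))) * sqrt (a^2)" using a by simp
  also have "\<dots> = sqrt (a * b / (a + b))" unfolding real_sqrt_mult[symmetric]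
  proof (rule arg_cong[where f=sqrt])
    have "a + b > 0" using a b by simp
    then show "b / (a * (a + b)) * a\<^sup>2 = a * b / (a + b)" using a
      by (simp add: power2_eq_square divide_simps) (simp add: algebra_simps)?
  qed
  also have "\<dots> = sqrt (a / (b * (a + b))) * sqrt (b^2)" unfolding real_sqrt_mult[symmetric]
  proof (rule arg_cong[where f=sqrt])
    have "a + b > 0" using a b by simp
    then show "a * b / (a + b) = a / (b * (a + b)) * b\<^sup>2" using b
      by (simp add: power2_eq_square divide_simps) (simp add: algebra_simps)?
  qed
  also have "\<dots> = sqrt (a / (b * (a + b))) * b" using b by simp
  finally show ?thesis .
qed

lemma norm_aux: fixes a b :: real shows "a > 0 \<Longrightarrow> b > 0 \<Longrightarrow> b / (a * (a + b)) * a + a / (b * (a + b)) * b = 1"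
proof -
  assume a: "a > 0" and b: "b > 0"
  then have s: "a + b > 0" by (rule add_pos_pos)
  have "b / (a * (a + b)) * a = b / (a + b)" using a s by (simp add: divide_simps)
  moreover have "a / (b * (a + b)) * b = a / (a + b)" using b s by (simp add: divide_simps)
  ultimately show ?thesis using s by (simp add: add_divide_distrib[symmetric])
qed

lemma c_sq: "valid v \<Longrightarrow> (c1 v)^2 = mB v / (mA v * (mA v + mB v)) \<and> (c2 v)^2 = mA v / (mB v * (mA v + mB v))"
  using mAB_pos[of v] sq_aux[of "mA v" "mB v"] sq_aux[of "mB v" "mA v"]
  by (simp add: c1_def c2_def add.commute)

lemma c_balance: "valid v \<Longrightarrow> c1 v * mA v = c2 v * mB v"
  using mAB_pos[of v] bal_aux[of "mA v" "mB v"] by (simp add: c1_def c2_def)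

lemma c_norm: "valid v \<Longrightarrow> (c1 v)^2 * mA v + (c2 v)^2 * mB v = 1"
  using c_sq[of v] mAB_pos[of v] norm_aux[of "mA v" "mB v"] by simp

lemma hf_meas: "hf v \<in> borel_measurable MM"
  unfolding hf_def using ns_sets by measurable

lemma hf_bound: "\<bar>hf v x\<bar> \<le> c1 v + c2 v"
  using c_nonneg[of v] by (auto simp: hf_def indicator_def)

lemma bounded_integrable: fixes f :: "real \<Rightarrow> real" shows "f \<in> borel_measurable MM \<Longrightarrow> (\<And>x. \<bar>f x\<bar> \<le> B) \<Longrightarrow> integrable MM f"
  by (rule finite_measure.integrable_const_bound[OF fin_MM, where B=B]) auto

lemma hf_int: "integrable MM (hf v)"
  by (rule bounded_integrable[OF hf_meas hf_bound])

lemma hf_outside: "valid v \<Longrightarrow> x \<notin> ns v \<Longrightarrow> hf v x = 0"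
proof -
  assume "valid v" "x \<notin> ns v"
  then have "x \<notin> ns (child v True)" "x \<notin> ns (child v False)"
    using ns_child_sub[of v True] ns_child_sub[of v False] by blast+
  then show ?thesis by (simp add: hf_def)
qed

lemma hf_integral: "valid v \<Longrightarrow> integral\<^sup>L MM (hf v) = 0"
proof -
  assume v: "valid v"
  have "integral\<^sup>L MM (hf v) = c1 v * mA v - c2 v * mB v"
    unfolding hf_def mA_def mB_def
    by (simp add: integral_diff ind_int)
  then show ?thesis using c_balance[OF v] by simp
qed

lemma hf_sq: "valid v \<Longrightarrow> integral\<^sup>L MM (\<lambda>x. hf v x * hf v x) = 1"
proof -
  assume v: "valid v"
  have "hf v x * hf v x = (c1 v)^2 * indicator (ns (child v True)) x + (c2 v)^2 * indicator (ns (child v False)) x" for x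
    using ns_child_disj[OF v] by (auto simp: hf_def indicator_def power2_eq_square)
  then have "integral\<^sup>L MM (\<lambda>x. hf v x * hf v x) = (c1 v)^2 * mA v + (c2 v)^2 * mB v"
    unfolding mA_def mB_def by (simp add: integral_add ind_int)
  then show ?thesis using c_norm[OF v] by simp
qed

lemma hf_orth_nested:
  assumes v: "valid v" and w: "valid w" and sub: "ns w \<subseteq> ns (child v c)"
  shows "integral\<^sup>L MM (\<lambda>x. hf v x * hf w x) = 0"
proof -
  define k where "k = (if c then c1 v else - c2 v)"
  have "(\<lambda>x. hf v x * hf w x) = (\<lambda>x. k * hf w x)"
  proof (rule ext)
    fix x show "hf v x * hf w x = k * hf w x"
  proof (cases "x \<in> ns w")
    case True
    then have "x \<in> ns (child v c)" using sub by blast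
    then have "hf v x = k"
    proof (cases c)
      case True
      with \<open>x \<in> ns (child v c)\<close> have "x \<in> ns (child v True)" "x \<notin> ns (child v False)"
        using ns_child_disj[OF v] by auto
      then show ?thesis using True by (simp add: hf_def k_def)
    next
      case False
      with \<open>x \<in> ns (child v c)\<close> have "x \<notin> ns (child v True)" "x \<in> ns (child v False)"
        using ns_child_disj[OF v] by auto
      then show ?thesis using False by (simp add: hf_def k_def)
    qed
    then show ?thesis by simp
  next
    case False
    then show ?thesis using hf_outside[OF w] by simp
  qed
  qed
  then have "integral\<^sup>L MM (\<lambda>x. hf v x * hf w x) = k * integral\<^sup>L MM (hf w)" by simp
  then show ?thesis using hf_integral[OF w] by simp
qed

lemma hf_orth_disj:
  assumes v: "valid v" and w: "valid w" and d: "ns v \<inter> ns w = {}"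
  shows "integral\<^sup>L MM (\<lambda>x. hf v x * hf w x) = 0"
proof -
  have "(\<lambda>x. hf v x * hf w x) = (\<lambda>x. 0)"
  proof
    fix x show "hf v x * hf w x = 0"
      using hf_outside[OF v, of x] hf_outside[OF w, of x] d by auto
  qed
  then show ?thesis by simp
qed


definition go :: "nd \<Rightarrow> bool list \<Rightarrow> nd" where
  "go v bs = fold (\<lambda>c v. child v c) bs v"

definition nodeOf :: "bool list \<Rightarrow> nd" where "nodeOf bs = go (Main 0 0) bs"

lemma go_Nil[simp]: "go v [] = v" by (simp add: go_def)
lemma go_Cons[simp]: "go v (c # q) = go (child v c) q" by (simp add: go_def)
lemma go_append: "go v (p @ q) = go (go v p) q" by (simp add: go_def)
lemma nodeOf_snoc: "nodeOf (p @ [c]) = child (nodeOf p) c" by (simp add: nodeOf_def go_append)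
lemma nodeOf_append: "nodeOf (p @ q) = go (nodeOf p) q" by (simp add: nodeOf_def go_append)
lemma nodeOf_Nil[simp]: "nodeOf [] = Main 0 0" by (simp add: nodeOf_def)

lemma valid_go: "valid v \<Longrightarrow> valid (go v q)"
  by (induction q arbitrary: v) (auto intro: valid_child)

lemma ns_go_sub: "valid v \<Longrightarrow> ns (go v q) \<subseteq> ns v"
proof (induction q arbitrary: v)
  case Nil
  then show ?case by simp
next
  case (Cons c q)
  have "ns (go (child v c) q) \<subseteq> ns (child v c)" using Cons valid_child by blast
  then show ?case using ns_child_sub[OF Cons.prems, of c] by simp
qed

lemma valid_root: "valid (Main 0 0)" by simp

lemma valid_nodeOf: "valid (nodeOf p)"
  unfolding nodeOf_def by (rule valid_go[OF valid_root])

lemma ns_ext: "ns (nodeOf (p @ c # q)) \<subseteq> ns (child (nodeOf p) c)"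
  unfolding nodeOf_def go_append go_Cons
  by (rule ns_go_sub[OF valid_child[OF valid_go[OF valid_root]]])

lemma ns_root: "ns (Main 0 0) = Om"
proof -
  have "raw (Main 0 0) = {0..<2}"
    by (auto simp: Js_def Ds_def dd_def)
  then show ?thesis by (auto simp: ns_def)
qed

lemma list_tri:
  fixes p q :: "bool list"
  shows "p \<noteq> q \<Longrightarrow> (\<exists>r c. q = p @ c # r) \<or> (\<exists>r c. p = q @ c # r) \<or>
     (\<exists>x c r1 r2. p = x @ c # r1 \<and> q = x @ (\<not> c) # r2)"
proof (induction p arbitrary: q)
  case Nil
  then obtain c r where "q = c # r" by (cases q) auto
  then show ?case by auto
next
  case (Cons a p)
  show ?case
  proof (cases q)
    case Nil
    then show ?thesis by auto
  next
    case (Cons b q')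
    show ?thesis
    proof (cases "a = b")
      case False
      then have "b = (\<not> a)" by auto
      then have "a # p = [] @ a # p \<and> q = [] @ (\<not> a) # q'" using Cons by simp
      then show ?thesis by blast
    next
      case True
      then have "p \<noteq> q'" using Cons \<open>a # p \<noteq> q\<close> by auto
      from Cons.IH[OF this] show ?thesis
      proof (elim disjE exE)
        fix r c assume "q' = p @ c # r"
        then have "q = (a # p) @ c # r" using Cons True by simp
        then show ?thesis by blast
      next
        fix r c assume "p = q' @ c # r"
        then have "a # p = q @ c # r" using Cons True by simp
        then show ?thesis by blast
      next
        fix x c r1 r2 assume "p = x @ c # r1 \<and> q' = x @ (\<not> c) # r2"
        then have "a # p = (a # x) @ c # r1 \<and> q = (a # x) @ (\<not> c) # r2" using Cons True by simp
        then show ?thesis by blast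
      qed
    qed
  qed
qed

lemma hf_orth_paths:
  assumes "p \<noteq> q"
  shows "integral\<^sup>L MM (\<lambda>x. hf (nodeOf p) x * hf (nodeOf q) x) = 0"
  using list_tri[OF assms]
proof (elim disjE exE)
  fix r c assume "q = p @ c # r"
  then show ?thesis using ns_ext[of p c r]
    by (intro hf_orth_nested[OF valid_nodeOf valid_nodeOf]) auto
next
  fix r c assume "p = q @ c # r"
  then have "integral\<^sup>L MM (\<lambda>x. hf (nodeOf q) x * hf (nodeOf p) x) = 0" using ns_ext[of q c r]
    by (intro hf_orth_nested[OF valid_nodeOf valid_nodeOf]) auto
  then show ?thesis by (simp add: mult.commute)
next
  fix x c r1 r2 assume h: "p = x @ c # r1 \<and> q = x @ (\<not> c) # r2"
  have "ns (nodeOf p) \<subseteq> ns (child (nodeOf x) c)" using h ns_ext by auto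
  moreover have "ns (nodeOf q) \<subseteq> ns (child (nodeOf x) (\<not> c))" using h ns_ext by auto
  moreover have "ns (child (nodeOf x) c) \<inter> ns (child (nodeOf x) (\<not> c)) = {}"
    using ns_child_disj[OF valid_nodeOf, of x] by (cases c) auto
  ultimately have "ns (nodeOf p) \<inter> ns (nodeOf q) = {}" by blast
  then show ?thesis by (intro hf_orth_disj[OF valid_nodeOf valid_nodeOf])
qed

lemma same_length_disj:
  assumes "p \<noteq> q" "length p = length q"
  shows "ns (nodeOf p) \<inter> ns (nodeOf q) = {}"
  using list_tri[OF assms(1)]
proof (elim disjE exE)
  fix r c assume "q = p @ c # r"
  then show ?thesis using assms(2) by simp
next
  fix r c assume "p = q @ c # r"
  then show ?thesis using assms(2) by simp
next
  fix x c r1 r2 assume h: "p = x @ c # r1 \<and> q = x @ (\<not> c) # r2"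
  have "ns (nodeOf p) \<subseteq> ns (child (nodeOf x) c)" using h ns_ext by auto
  moreover have "ns (nodeOf q) \<subseteq> ns (child (nodeOf x) (\<not> c))" using h ns_ext by auto
  moreover have "ns (child (nodeOf x) c) \<inter> ns (child (nodeOf x) (\<not> c)) = {}"
    using ns_child_disj[OF valid_nodeOf, of x] by (cases c) auto
  ultimately show ?thesis by blast
qed

lemma length_kind: "(case nodeOf p of Main n j \<Rightarrow> length p = 2*n | Prim n j \<Rightarrow> length p = 2*n+1
   | Sub a b \<Rightarrow> True)"
proof (induction p rule: rev_induct)
  case Nil
  then show ?case by simp
next
  case (snoc c p)
  then show ?case by (cases "nodeOf p") (auto simp: nodeOf_snoc)
qed

lemma reach_Main: "j < 2^n \<Longrightarrow> \<exists>p. nodeOf p = Main n j"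
proof (induction n arbitrary: j)
  case 0
  then show ?case by (intro exI[of _ "[]"]) simp
next
  case (Suc n)
  then have "j div 2 < 2^n" by auto
  from Suc.IH[OF this] obtain p where p: "nodeOf p = Main n (j div 2)" by blast
  have "nodeOf (p @ [True, even j]) = Main (Suc n) j"
  proof (cases "even j")
    case True
    then have "2 * (j div 2) = j" by simp
    then show ?thesis using p True by (simp add: nodeOf_append)
  next
    case False
    then have "2 * (j div 2) + 1 = j" by presburger
    then show ?thesis using p False by (simp add: nodeOf_append)
  qed
  then show ?case by blast
qed


lemma final_zero:
  fixes f :: "real \<Rightarrow> real"
  assumes int: "integrable (lebesgue_on {0<..<2}) f"
    and G: "\<And>t. integral\<^sup>L (lebesgue_on {0<..<2}) (\<lambda>x. f x * indicator {..<t} x) = 0"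
  shows "AE x in lebesgue_on {0<..<2}. f x = 0"
proof -
  let ?O = "{0<..<2::real}"
  have Os: "?O \<inter> space lebesgue \<in> sets lebesgue" by simp
  define F where "F x = indicator ?O x * f x" for x
  have intF: "integrable lebesgue F"
    using int unfolding F_def integrable_restrict_space[OF Os] by simp
  have FG: "integral\<^sup>L lebesgue (\<lambda>x. F x * indicator {..<t} x) = 0" for t
  proof -
    have "integral\<^sup>L (lebesgue_on ?O) (\<lambda>x. f x * indicator {..<t} x)
        = integral\<^sup>L lebesgue (\<lambda>x. F x * indicator {..<t} x)"
      unfolding integral_restrict_space[OF Os] F_def by (simp add: mult.assoc)
    then show ?thesis using G[of t] by simp
  qed
  have Fm: "F \<in> borel_measurable (completion lborel)"
    using intF by auto
  obtain g where gm: "g \<in> borel_measurable lborel" and Fg: "AE x in lborel. F x = g x"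
    using completion_ex_borel_measurable_real[OF Fm] by blast
  have FgL: "AE x in lebesgue. F x = g x" using Fg by (rule AE_completion)
  have gmL: "g \<in> borel_measurable lebesgue" using gm by (rule measurable_completion)
  have intgL: "integrable lebesgue g"
    by (rule integrable_cong_AE_imp[OF intF gmL FgL])
  have intg: "integrable lborel g"
    using intgL integrable_completion[of g lborel] gm by simp
  have gG: "integral\<^sup>L lborel (\<lambda>x. g x * indicator A x) = integral\<^sup>L lebesgue (\<lambda>x. F x * indicator A x)"
    if A: "A \<in> sets borel" for A
  proof -
    have m: "(\<lambda>x. g x * indicator A x) \<in> borel_measurable lborel" using gm A by measurable
    have AL: "A \<in> sets lebesgue" using A by (intro sets_completionI_sets) simp
    have mL: "(\<lambda>x. g x * indicator A x) \<in> borel_measurable lebesgue" using m by (rule measurable_completion)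
    have mF: "(\<lambda>x. F x * indicator A x) \<in> borel_measurable lebesgue"
      using Fm AL by (intro borel_measurable_times borel_measurable_indicator) auto
    have "integral\<^sup>L lborel (\<lambda>x. g x * indicator A x) = integral\<^sup>L lebesgue (\<lambda>x. g x * indicator A x)"
      using integral_completion[OF m] by simp
    also have "\<dots> = integral\<^sup>L lebesgue (\<lambda>x. F x * indicator A x)"
      using FgL by (intro integral_cong_AE[OF mL mF]) auto
    finally show ?thesis .
  qed
  have g_lt: "integral\<^sup>L lborel (\<lambda>x. g x * indicator {..<t} x) = 0" for t
    using gG[of "{..<t}"] FG[of t] by simp
  have g_le: "integral\<^sup>L lborel (\<lambda>x. g x * indicator {..t} x) = 0" for t
  proof -
    have "AE x in lborel. x \<noteq> t" by (rule AE_lborel_singleton)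
    then have "AE x in lborel. g x * indicator {..t} x = g x * indicator {..<t} x"
      by eventually_elim (auto simp: indicator_def)
    then have "integral\<^sup>L lborel (\<lambda>x. g x * indicator {..t} x) = integral\<^sup>L lborel (\<lambda>x. g x * indicator {..<t} x)"
      by (intro integral_cong_AE) (use gm in auto)
    then show ?thesis using g_lt by simp
  qed
  have g_all: "integral\<^sup>L lborel g = 0"
  proof -
    have "AE x in lborel. g x = g x * indicator {..<3} x"
      using Fg by eventually_elim (auto simp: F_def indicator_def)
    then have "integral\<^sup>L lborel g = integral\<^sup>L lborel (\<lambda>x. g x * indicator {..<3} x)"
      by (intro integral_cong_AE) (use gm in auto)
    then show ?thesis using g_lt by simp
  qed
  have g_gt: "integral\<^sup>L lborel (\<lambda>x. g x * indicator {t<..} x) = 0" for t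
  proof -
    have "(\<lambda>x. g x * indicator {t<..} x) = (\<lambda>x. g x - g x * indicator {..t} x)"
      by (auto simp: indicator_def)
    moreover have "integrable lborel (\<lambda>x. g x * indicator {..t} x)"
      using intg by (intro integrable_real_mult_indicator) auto
    ultimately show ?thesis using g_all g_le[of t] intg by simp
  qed
  define gp where "gp x = max 0 (g x)" for x
  define gn where "gn x = max 0 (- g x)" for x
  have gpm[measurable]: "gp \<in> borel_measurable lborel" unfolding gp_def using gm by measurable
  have gnm[measurable]: "gn \<in> borel_measurable lborel" unfolding gn_def using gm by measurable
  have intgp: "integrable lborel gp" unfolding gp_def using intg by (intro integrable_max) auto
  have intgn: "integrable lborel gn" unfolding gn_def using intg by (intro integrable_max) auto
  have emeq: "emeasure (density lborel (\<lambda>x. ennreal (gp x))) {t<..} = emeasure (density lborel (\<lambda>x. ennreal (gn x))) {t<..}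
     \<and> emeasure (density lborel (\<lambda>x. ennreal (gp x))) {t<..} < \<infinity>" for t
  proof -
    have ip: "integrable lborel (\<lambda>x. gp x * indicator {t<..} x)"
      using intgp by (intro integrable_real_mult_indicator) auto
    have in': "integrable lborel (\<lambda>x. gn x * indicator {t<..} x)"
      using intgn by (intro integrable_real_mult_indicator) auto
    have e1: "emeasure (density lborel (\<lambda>x. ennreal (gp x))) {t<..} = ennreal (integral\<^sup>L lborel (\<lambda>x. gp x * indicator {t<..} x))"
    proof -
      have "emeasure (density lborel (\<lambda>x. ennreal (gp x))) {t<..} = (\<integral>\<^sup>+x. ennreal (gp x) * indicator {t<..} x \<partial>lborel)"
        by (rule emeasure_density) auto
      also have "\<dots> = (\<integral>\<^sup>+x. ennreal (gp x * indicator {t<..} x) \<partial>lborel)"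
        by (auto intro!: nn_integral_cong split: split_indicator)
      also have "\<dots> = ennreal (integral\<^sup>L lborel (\<lambda>x. gp x * indicator {t<..} x))"
        by (rule nn_integral_eq_integral[OF ip]) (auto simp: gp_def)
      finally show ?thesis .
    qed
    have e2: "emeasure (density lborel (\<lambda>x. ennreal (gn x))) {t<..} = ennreal (integral\<^sup>L lborel (\<lambda>x. gn x * indicator {t<..} x))"
    proof -
      have "emeasure (density lborel (\<lambda>x. ennreal (gn x))) {t<..} = (\<integral>\<^sup>+x. ennreal (gn x) * indicator {t<..} x \<partial>lborel)"
        by (rule emeasure_density) auto
      also have "\<dots> = (\<integral>\<^sup>+x. ennreal (gn x * indicator {t<..} x) \<partial>lborel)"
        by (auto intro!: nn_integral_cong split: split_indicator)
      also have "\<dots> = ennreal (integral\<^sup>L lborel (\<lambda>x. gn x * indicator {t<..} x))"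
        by (rule nn_integral_eq_integral[OF in']) (auto simp: gn_def)
      finally show ?thesis .
    qed
    have "(\<lambda>x. g x * indicator {t<..} x) = (\<lambda>x. gp x * indicator {t<..} x - gn x * indicator {t<..} x)"
      by (auto simp: gp_def gn_def indicator_def max_def)
    then have "integral\<^sup>L lborel (\<lambda>x. gp x * indicator {t<..} x) = integral\<^sup>L lborel (\<lambda>x. gn x * indicator {t<..} x)"
      using g_gt[of t] ip in' by simp
    then show ?thesis using e1 e2 by simp
  qed
  have "density lborel (\<lambda>x. ennreal (gp x)) = density lborel (\<lambda>x. ennreal (gn x))"
  proof (rule measure_eqI_lessThan)
    fix x
    show "emeasure (density lborel (\<lambda>x. ennreal (gp x))) {x<..} < \<infinity>" using emeq[of x] by blast
    show "emeasure (density lborel (\<lambda>x. ennreal (gp x))) {x<..} = emeasure (density lborel (\<lambda>x. ennreal (gn x))) {x<..}"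
      using emeq[of x] by blast
  qed auto
  then have "AE x in lborel. ennreal (gp x) = ennreal (gn x)"
    by (intro sigma_finite_measure.density_unique[OF sigma_finite_lborel]) auto
  then have "AE x in lborel. g x = 0"
    by eventually_elim (auto simp: gp_def gn_def max_def split: if_splits)
  then have "AE x in lborel. F x = 0" using Fg by eventually_elim simp
  then have "AE x in lebesgue. F x = 0" by (rule AE_completion)
  then have "AE x in lebesgue. x \<in> ?O \<longrightarrow> f x = 0"
    by eventually_elim (auto simp: F_def)
  then show ?thesis using AE_restrict_space_iff[OF Os] by simp
qed


definition IS :: "(real \<Rightarrow> real) \<Rightarrow> real set \<Rightarrow> real" where
  "IS f A = integral\<^sup>L MM (\<lambda>x. f x * indicator A x)"

lemma L2_integrable:
  fixes f :: "real \<Rightarrow> real"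
  assumes m: "f \<in> borel_measurable MM" and sq: "integrable MM (\<lambda>x. (f x)\<^sup>2)"
  shows "integrable MM f"
proof (rule Bochner_Integration.integrable_bound[OF _ m])
  show "integrable MM (\<lambda>x. 1 + (f x)\<^sup>2)"
    by (rule Bochner_Integration.integrable_add[OF finite_measure.integrable_const[OF fin_MM] sq])
  show "AE x in MM. norm (f x) \<le> norm (1 + (f x)\<^sup>2)"
  proof (rule AE_I2)
    fix x
    have e: "(\<bar>f x\<bar> - 1)\<^sup>2 = (f x)\<^sup>2 - 2 * \<bar>f x\<bar> + 1"
      by (simp add: power2_eq_square algebra_simps)
    have "0 \<le> (\<bar>f x\<bar> - 1)\<^sup>2" by simp
    then have "\<bar>f x\<bar> \<le> 1 + (f x)\<^sup>2" using e by (simp add: zero_le_power2) 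
    then show "norm (f x) \<le> norm (1 + (f x)\<^sup>2)" by simp
  qed
qed

lemma ind_int_f:
  fixes f :: "real \<Rightarrow> real"
  assumes "A \<in> sets lebesgue" "integrable MM f"
  shows "integrable MM (\<lambda>x. f x * indicator A x)"
proof -
  have "A \<inter> Om \<in> sets MM" using assms(1) by (intro sets_MM) auto
  then have "integrable MM (\<lambda>x. f x * indicator (A \<inter> Om) x)"
    using assms(2) by (rule integrable_real_mult_indicator)
  moreover have "integrable MM (\<lambda>x. f x * indicator A x) \<longleftrightarrow> integrable MM (\<lambda>x. f x * indicator (A \<inter> Om) x)"
    by (rule Bochner_Integration.integrable_cong) (auto simp: indicator_def)
  ultimately show ?thesis by simp
qed

lemma IS_Om: "IS f (A \<inter> Om) = IS f A"
  unfolding IS_def by (rule Bochner_Integration.integral_cong) (auto simp: indicator_def)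

lemma IS_add:
  fixes f :: "real \<Rightarrow> real"
  assumes "A \<in> sets lebesgue" "B \<in> sets lebesgue" "A \<inter> B = {}" "integrable MM f"
  shows "IS f (A \<union> B) = IS f A + IS f B"
proof -
  have "(\<lambda>x. f x * indicator (A \<union> B) x) = (\<lambda>x. f x * indicator A x + f x * indicator B x)"
    using assms(3) by (intro ext) (auto split: split_indicator)
  then show ?thesis unfolding IS_def
    using ind_int_f[OF assms(1,4)] ind_int_f[OF assms(2,4)] by simp
qed

lemma IS_step:
  fixes f :: "real \<Rightarrow> real"
  assumes v: "valid v" and f: "integrable MM f" and z: "IS f (ns v) = 0"
    and o: "integral\<^sup>L MM (\<lambda>x. f x * hf v x) = 0"
  shows "IS f (ns (child v c)) = 0"
proof -
  let ?A = "ns (child v True)" and ?B = "ns (child v False)"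
  have "IS f (ns v) = IS f (?A \<union> ?B)" using ns_child_un[OF v] by simp
  also have "\<dots> = IS f ?A + IS f ?B" by (rule IS_add[OF ns_lebesgue ns_lebesgue ns_child_disj[OF v] f])
  finally have "IS f (ns v) = IS f ?A + IS f ?B" .
  then have s: "IS f ?A + IS f ?B = 0" using z by simp
  have "(\<lambda>x. f x * hf v x) = (\<lambda>x. c1 v * (f x * indicator ?A x) - c2 v * (f x * indicator ?B x))"
    by (auto simp: hf_def algebra_simps)
  then have "integral\<^sup>L MM (\<lambda>x. f x * hf v x) = c1 v * IS f ?A - c2 v * IS f ?B"
    unfolding IS_def using ind_int_f[OF ns_lebesgue f] by simp
  then have d: "c1 v * IS f ?A - c2 v * IS f ?B = 0" using o by simp
  have "c1 v > 0" using mAB_pos[OF v] by (simp add: c1_def)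
  have b: "IS f ?B = - IS f ?A" using s by linarith
  have "(c1 v + c2 v) * IS f ?A = c1 v * IS f ?A - c2 v * IS f ?B" unfolding b by (simp add: algebra_simps)
  then have "(c1 v + c2 v) * IS f ?A = 0" using d by simp
  moreover have "c1 v + c2 v > 0" using \<open>c1 v > 0\<close> c_nonneg[of v] by simp
  ultimately have "IS f ?A = 0" by simp
  then show ?thesis using s by (cases c) auto
qed

lemma IS_all_nodes:
  fixes f :: "real \<Rightarrow> real"
  assumes f: "integrable MM f" and z: "integral\<^sup>L MM f = 0"
    and o: "\<And>p. integral\<^sup>L MM (\<lambda>x. f x * hf (nodeOf p) x) = 0"
  shows "IS f (ns (nodeOf p)) = 0"
proof (induction p rule: rev_induct)
  case Nil
  have "IS f (ns (Main 0 0)) = integral\<^sup>L MM f"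
    unfolding IS_def ns_root by (rule Bochner_Integration.integral_cong) (auto simp: indicator_def)
  then show ?case using z by simp
next
  case (snoc c p)
  then show ?case unfolding nodeOf_snoc by (intro IS_step[OF valid_nodeOf f _ o])
qed


definition pa :: "nat \<Rightarrow> nat \<Rightarrow> real" where "pa n j = LL n j + 2 * dd (Suc n)"
definition pw :: "nat \<Rightarrow> real" where "pw n = dd n - 2 * dd (Suc n)"

lemma pw_pos: "pw n > 0" using dd_Suc[of n] by (simp add: pw_def)

lemma reach_Sub:
  assumes j: "j < 2^n"
  shows "i < 2^m \<Longrightarrow> \<exists>p. nodeOf p = Sub (pa n j + real i * pw n / 2^m) (pa n j + (real i + 1) * pw n / 2^m)"
proof (induction m arbitrary: i)
  case 0
  obtain p where p: "nodeOf p = Main n j" using reach_Main[OF j] by blast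
  have "nodeOf (p @ [False]) = Sub (pa n j) (pa n j + pw n)"
    using p by (simp add: nodeOf_snoc pa_def pw_def)
  then show ?case using 0 by auto
next
  case (Suc m)
  define a where "a = pa n j"
  define w where "w = pw n"
  define k where "k = i div 2"
  have "k < 2^m" using Suc.prems by (auto simp: k_def)
  from Suc.IH[OF this] obtain p where
    p: "nodeOf p = Sub (a + real k * w / 2^m) (a + (real k + 1) * w / 2^m)"
    unfolding a_def w_def by blast
  have mid: "((a + real k * w / 2^m) + (a + (real k + 1) * w / 2^m)) / 2
      = a + (2 * real k + 1) * w / 2^Suc m"
    by (simp add: field_simps)
  have lo: "a + real k * w / 2^m = a + (2 * real k) * w / 2^Suc m"
    by (simp add: field_simps)
  have hi: "a + (real k + 1) * w / 2^m = a + (2 * real k + 1 + 1) * w / 2^Suc m"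
    by (simp add: field_simps)
  show ?case
  proof (cases "even i")
    case True
    then have "i = 2 * k" by (simp add: k_def)
    then have ii: "real i = 2 * real k" by simp
    have "nodeOf (p @ [True]) = Sub (a + real k * w / 2^m) (((a + real k * w / 2^m) + (a + (real k + 1) * w / 2^m)) / 2)"
      by (simp only: nodeOf_snoc p child.simps if_True)
    also have "\<dots> = Sub (a + real i * w / 2^Suc m) (a + (real i + 1) * w / 2^Suc m)"
      unfolding mid ii using lo by simp
    finally show ?thesis unfolding a_def w_def by blast
  next
    case False
    then have "i = 2 * k + 1" by (simp add: k_def)
    then have ii: "real i = 2 * real k + 1" by simp
    have "nodeOf (p @ [False]) = Sub (((a + real k * w / 2^m) + (a + (real k + 1) * w / 2^m)) / 2) (a + (real k + 1) * w / 2^m)"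
      by (simp only: nodeOf_snoc p child.simps if_False)
    also have "\<dots> = Sub (a + real i * w / 2^Suc m) (a + (real i + 1) * w / 2^Suc m)"
      unfolding mid ii using hi by simp
    finally show ?thesis unfolding a_def w_def by blast
  qed
qed

lemma reach_Prim: "j < 2^n \<Longrightarrow> \<exists>p. nodeOf p = Prim n j"
proof -
  assume "j < 2^n"
  then obtain p where "nodeOf p = Main n j" using reach_Main by blast
  then have "nodeOf (p @ [True]) = Prim n j" by (simp add: nodeOf_snoc)
  then show ?thesis by blast
qed


locale ctx =
  fixes f :: "real \<Rightarrow> real"
  assumes fm: "f \<in> borel_measurable MM"
    and fsq: "integrable MM (\<lambda>x. (f x)\<^sup>2)"
    and nodes: "\<And>p. IS f (ns (nodeOf p)) = 0"
begin

lemma fint: "integrable MM f" by (rule L2_integrable[OF fm fsq])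

lemma IS_raw: "IS f (ns v) = IS f (raw v)"
  unfolding ns_def by (rule IS_Om)

lemma IS_Main: "j < 2^n \<Longrightarrow> IS f (Js n j \<union> Ds n j) = 0"
  using reach_Main[of j n] nodes IS_raw by (metis raw.simps(1))

lemma Js_leb: "Js n j \<in> sets lebesgue" by (simp add: Js_def)
lemma Ds_leb: "Ds n j \<in> sets lebesgue" by (simp add: Ds_def)

lemma Js_Ds_disj: "j < 2^n \<Longrightarrow> Js n j \<inter> Ds n j = {}"
  using Js_sub[of j n] Ds_sub[of j n] ivl01_12 by blast

lemma IS_JD: "j < 2^n \<Longrightarrow> IS f (Js n j) + IS f (Ds n j) = 0"
  using IS_Main IS_add[OF Js_leb Ds_leb Js_Ds_disj fint] by simp

lemma J_approx:
  "j < 2^n \<Longrightarrow> \<exists>E. E \<in> sets lebesgue \<and> E \<subseteq> Js n j \<union> Ds n j \<and> E \<subseteq> {1..<2}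
     \<and> measure MM E \<le> 1 / (real (n+k+1) * 2^n) \<and> IS f (Js n j) = - IS f E"
proof (induction k arbitrary: n j)
  case 0
  have "measure MM (Ds n j) = dd n"
    using Ds_sub[OF 0] dd_pos[of n] by (subst measure_MM) (auto simp: Ds_def)
  then show ?case using Ds_sub[OF 0] IS_JD[OF 0] Ds_leb
    by (intro exI[of _ "Ds n j"]) (auto simp: dd_def add_eq_0_iff)
next
  case (Suc k)
  have a: "2*j < 2^Suc n" "2*j+1 < 2^Suc n" using Suc.prems by auto
  obtain E1 where E1: "E1 \<in> sets lebesgue" "E1 \<subseteq> Js (Suc n) (2*j) \<union> Ds (Suc n) (2*j)" "E1 \<subseteq> {1..<2}"
     "measure MM E1 \<le> 1 / (real (Suc n+k+1) * 2^Suc n)" "IS f (Js (Suc n) (2*j)) = - IS f E1"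
    using Suc.IH[OF a(1)] by blast
  obtain E2 where E2: "E2 \<in> sets lebesgue" "E2 \<subseteq> Js (Suc n) (2*j+1) \<union> Ds (Suc n) (2*j+1)" "E2 \<subseteq> {1..<2}"
     "measure MM E2 \<le> 1 / (real (Suc n+k+1) * 2^Suc n)" "IS f (Js (Suc n) (2*j+1)) = - IS f E2"
    using Suc.IH[OF a(2)] by blast
  have disj: "E1 \<inter> E2 = {}"
    using E1(2) E2(2) child_disj[of "Prim n j"] Suc.prems by auto
  have sub: "E1 \<union> E2 \<subseteq> Js n j \<union> Ds n j"
    using E1(2) E2(2) Js_children(1)[of n j] Ds_children(1)[of n j] Dp_Ps(1)[of n j] by blast
  have E1M: "E1 \<in> sets MM" using E1(1,3) by (intro sets_MM) auto
  have E2M: "E2 \<in> sets MM" using E2(1,3) by (intro sets_MM) auto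
  have "measure MM (E1 \<union> E2) = measure MM E1 + measure MM E2"
    using emeasure_MM_fin E1M E2M disj by (intro measure_Union) (auto simp: less_top)
  also have "\<dots> \<le> 2 * (1 / (real (Suc n+k+1) * 2^Suc n))" using E1(4) E2(4) by linarith
  also have "\<dots> = 1 / (real (n + Suc k + 1) * 2^n)" by (simp add: divide_simps)
  finally have m: "measure MM (E1 \<union> E2) \<le> 1 / (real (n + Suc k + 1) * 2^n)" .
  have "IS f (Js n j) = IS f (Js (Suc n) (2*j)) + IS f (Js (Suc n) (2*j+1))"
    using IS_add[OF Js_leb Js_leb Js_children(2) fint] Js_children(1) by metis
  also have "\<dots> = - IS f (E1 \<union> E2)"
    using E1(5) E2(5) IS_add[OF E1(1) E2(1) disj fint] by simp
  finally show ?case using sub m E1(1,3) E2(1,3) by (intro exI[of _ "E1 \<union> E2"]) auto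
qed

lemma small_int:
  assumes E: "E \<in> sets MM" and t: "t > 0"
  shows "\<bar>IS f E\<bar> \<le> t / 2 * integral\<^sup>L MM (\<lambda>x. (f x)\<^sup>2) + measure MM E / (2 * t)"
proof -
  have pt: "\<bar>f x * indicator E x\<bar> \<le> t / 2 * (f x)\<^sup>2 * indicator E x + indicator E x / (2 * t)" for x
  proof -
    have "0 \<le> (t * \<bar>f x\<bar> - 1)\<^sup>2" by simp
    then have "2 * t * \<bar>f x\<bar> \<le> t\<^sup>2 * (f x)\<^sup>2 + 1"
      by (simp add: power2_eq_square algebra_simps)
    then have "\<bar>f x\<bar> \<le> t / 2 * (f x)\<^sup>2 + 1 / (2 * t)"
      using t by (simp add: field_simps power2_eq_square)
    then show ?thesis by (auto simp: indicator_def abs_mult)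
  qed
  have i1: "integrable MM (\<lambda>x. f x * indicator E x)"
    using E fint by (rule integrable_real_mult_indicator)
  have i2: "integrable MM (\<lambda>x. (f x)\<^sup>2 * indicator E x)"
    using E fsq by (rule integrable_real_mult_indicator)
  have i3: "integrable MM (indicator E :: real \<Rightarrow> real)"
    using E emeasure_MM_fin by (intro integrable_real_indicator) auto
  have "\<bar>IS f E\<bar> \<le> integral\<^sup>L MM (\<lambda>x. \<bar>f x * indicator E x\<bar>)"
    unfolding IS_def by (rule integral_abs_bound)
  also have "\<dots> \<le> integral\<^sup>L MM (\<lambda>x. t / 2 * ((f x)\<^sup>2 * indicator E x) + indicator E x / (2 * t))"
    using pt i1 i2 i3 by (intro integral_mono) (auto simp: mult.assoc)
  also have "\<dots> = t / 2 * integral\<^sup>L MM (\<lambda>x. (f x)\<^sup>2 * indicator E x) + measure MM E / (2 * t)"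
  proof -
    have "E \<inter> Om = E" using sets.sets_into_space[OF E] by auto
    then show ?thesis using i2 i3 E by (simp add: integral_add)
  qed
  also have "\<dots> \<le> t / 2 * integral\<^sup>L MM (\<lambda>x. (f x)\<^sup>2) + measure MM E / (2 * t)"
  proof -
    have "integral\<^sup>L MM (\<lambda>x. (f x)\<^sup>2 * indicator E x) \<le> integral\<^sup>L MM (\<lambda>x. (f x)\<^sup>2)"
      using i2 fsq by (intro integral_mono) (auto simp: indicator_def)
    then show ?thesis using t by simp
  qed
  finally show ?thesis .
qed

lemma IS_J_zero: "j < 2^n \<Longrightarrow> IS f (Js n j) = 0"
proof -
  assume j: "j < 2^n"
  define Q where "Q = integral\<^sup>L MM (\<lambda>x. (f x)\<^sup>2)"
  have Q0: "Q \<ge> 0" unfolding Q_def by (rule integral_nonneg_AE) auto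
  have "\<bar>IS f (Js n j)\<bar> \<le> e" if e: "e > 0" for e
  proof -
    define t where "t = e / (Q + 1)"
    have t: "t > 0" using e Q0 by (simp add: t_def)
    obtain k :: nat where k: "1 / (e * t) < real k" using reals_Archimedean2 by blast
    obtain E where E: "E \<in> sets lebesgue" "E \<subseteq> {1..<2}"
       "measure MM E \<le> 1 / (real (n+k+1) * 2^n)" "IS f (Js n j) = - IS f E"
      using J_approx[OF j, of k] by blast
    have EM: "E \<in> sets MM" using E(1,2) by (intro sets_MM) auto
    have "1 / (real (n+k+1) * 2^n) \<le> 1 / real (k+1)"
    proof (rule divide_left_mono)
      have "real (k+1) \<le> real (n+k+1)" by simp
      also have "\<dots> \<le> real (n+k+1) * 2^n" by simp
      finally show "real (k+1) \<le> real (n+k+1) * 2^n" .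
    qed auto
    also have "\<dots> < e * t"
    proof -
      have "1 / (e * t) < real (k+1)" using k by simp
      then show ?thesis using e t by (simp add: field_simps)
    qed
    finally have mE: "measure MM E < e * t" using E(3) by simp
    have "\<bar>IS f (Js n j)\<bar> = \<bar>IS f E\<bar>" using E(4) by simp
    also have "\<dots> \<le> t / 2 * Q + measure MM E / (2 * t)" unfolding Q_def by (rule small_int[OF EM t])
    also have "\<dots> \<le> e / 2 + e / 2"
    proof -
      have "t / 2 * Q \<le> e / 2" using e Q0 by (simp add: t_def field_simps)
      moreover have "measure MM E / (2 * t) \<le> e / 2" using mE t by (simp add: field_simps)
      ultimately show ?thesis by linarith
    qed
    finally show ?thesis by simp
  qed
  then show ?thesis
    by (metis abs_le_zero_iff dense not_le)
qed

lemma IS_D_zero: "j < 2^n \<Longrightarrow> IS f (Ds n j) = 0"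
  using IS_JD IS_J_zero by force

end


context ctx
begin

lemma IS_empty: "IS f {} = 0" by (simp add: IS_def)

lemma IS_neg: "t \<le> 0 \<Longrightarrow> IS f {..<t} = 0"
proof -
  assume "t \<le> 0"
  then have "{..<t} \<inter> Om = {}" by auto
  then show ?thesis using IS_Om[of f "{..<t}"] IS_empty by simp
qed

lemma Z1: "j \<le> 2^n \<Longrightarrow> IS f {..<real j / 2^n} = 0"
proof (induction j)
  case 0
  then show ?case using IS_neg by simp
next
  case (Suc j)
  then have j: "j < 2^n" by simp
  have le: "real j / 2^n \<le> (real j + 1) / 2^n" by (simp add: divide_right_mono)
  have "{..<real (Suc j) / 2^n} = {..<real j / 2^n} \<union> Js n j"
    using le unfolding Js_def of_nat_Suc add.commute[of 1] by auto
  moreover have "{..<real j / 2^n} \<inter> Js n j = {}" by (auto simp: Js_def)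
  ultimately have "IS f {..<real (Suc j) / 2^n} = IS f {..<real j / 2^n} + IS f (Js n j)"
    using IS_add[OF _ Js_leb _ fint] by simp
  then show ?case using Suc.IH j IS_J_zero[OF j] by simp
qed

lemma Z2: "j < 2^n \<Longrightarrow> IS f {..<LL n j} = 0"
proof (induction n arbitrary: j)
  case 0
  then show ?case using Z1[of 1 0] by simp
next
  case (Suc n)
  define k where "k = j div 2"
  have k: "k < 2^n" using Suc.prems by (auto simp: k_def)
  show ?case
  proof (cases "even j")
    case True
    then show ?thesis using Suc.IH[OF k] by (simp add: k_def)
  next
    case False
    then have LLj: "LL (Suc n) j = LL n k + dd (Suc n)" by (simp add: k_def)
    have k2: "2*k < 2^Suc n" using k by simp
    have "{..<LL n k + dd (Suc n)} = {..<LL n k} \<union> Ds (Suc n) (2*k)"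
      using dd_pos[of "Suc n"] by (auto simp: Ds_def)
    moreover have "{..<LL n k} \<inter> Ds (Suc n) (2*k) = {}" by (auto simp: Ds_def)
    ultimately have "IS f {..<LL n k + dd (Suc n)} = IS f {..<LL n k} + IS f (Ds (Suc n) (2*k))"
      using IS_add[OF _ Ds_leb _ fint] by simp
    then show ?thesis using LLj Suc.IH[OF k] IS_D_zero[OF k2] by simp
  qed
qed

lemma Z3:
  assumes j: "j < 2^n"
  shows "i \<le> 2^m \<Longrightarrow> IS f {..<pa n j + real i * pw n / 2^m} = 0"
proof (induction i)
  case 0
  have a: "2*j+1 < 2^Suc n" using j by simp
  have "pa n j = LL (Suc n) (2*j+1) + dd (Suc n)" by (simp add: pa_def)
  then have "{..<pa n j} = {..<LL (Suc n) (2*j+1)} \<union> Ds (Suc n) (2*j+1)"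
    using dd_pos[of "Suc n"] by (auto simp: Ds_def)
  moreover have "{..<LL (Suc n) (2*j+1)} \<inter> Ds (Suc n) (2*j+1) = {}" by (auto simp: Ds_def)
  ultimately have "IS f {..<pa n j} = IS f {..<LL (Suc n) (2*j+1)} + IS f (Ds (Suc n) (2*j+1))"
    using IS_add[OF _ Ds_leb _ fint] by simp
  then show ?case using Z2[OF a] IS_D_zero[OF a] by simp
next
  case (Suc i)
  then have i: "i < 2^m" by simp
  define l where "l = pa n j + real i * pw n / 2^m"
  define r where "r = pa n j + (real i + 1) * pw n / 2^m"
  have lr: "l \<le> r" using pw_pos[of n] by (simp add: l_def r_def divide_right_mono)
  obtain p where p: "nodeOf p = Sub l r" using reach_Sub[OF j i] unfolding l_def r_def by blast
  have "IS f {l..<r} = 0" using nodes[of p] IS_raw p by simp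
  have "{..<r} = {..<l} \<union> {l..<r}" using lr by auto
  moreover have "{..<l} \<inter> {l..<r} = {}" by auto
  ultimately have "IS f {..<r} = IS f {..<l} + IS f {l..<r}"
    using IS_add[OF _ _ _ fint] by simp
  then show ?case using Suc.IH i \<open>IS f {l..<r} = 0\<close> by (simp add: l_def r_def add.commute)
qed

end

lemma approx_grid:
  fixes a b t :: real
  assumes "a < b" "a \<le> t" "t < b"
  shows "\<exists>i. i < (2::nat)^k \<and> a + real i * (b - a) / 2^k \<le> t \<and> t < a + (real i + 1) * (b - a) / 2^k"
proof -
  define s where "s = (t - a) * 2^k / (b - a)"
  have s0: "0 \<le> s" using assms by (simp add: s_def)
  have s1: "s < 2^k" using assms by (simp add: s_def field_simps)
  define i where "i = nat \<lfloor>s\<rfloor>"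
  have ri: "real i = of_int \<lfloor>s\<rfloor>" using s0 by (simp add: i_def)
  have "real i \<le> s" "s < real i + 1" using ri by linarith+
  moreover have "real i < 2^k" using \<open>real i \<le> s\<close> s1 by linarith
  then have "i < 2^k" by (metis of_nat_less_iff of_nat_numeral of_nat_power)
  moreover have "a + real i * (b - a) / 2^k \<le> t \<longleftrightarrow> real i \<le> s"
    using assms by (simp add: s_def field_simps)
  moreover have "t < a + (real i + 1) * (b - a) / 2^k \<longleftrightarrow> s < real i + 1"
    using assms by (simp add: s_def field_simps)
  ultimately show ?thesis by blast
qed

lemma descent:
  fixes t :: real
  assumes "1 \<le> t" "t < 2"
  shows "(\<exists>i<2^m. t \<in> Ds m i) \<or> (\<exists>n j. n < m \<and> j < 2^n \<and> t \<in> Ps n j)"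
proof (induction m)
  case 0
  then show ?case using assms by (auto simp: Ds_def dd_def)
next
  case (Suc m)
  then show ?case
  proof (elim disjE exE conjE)
    fix i assume i: "i < 2^m" and t: "t \<in> Ds m i"
    then have "t \<in> Ds (Suc m) (2*i) \<or> t \<in> Ds (Suc m) (2*i+1) \<or> t \<in> Ps m i"
      using Dp_Ps(1)[of m i] Ds_children(1)[of m i] by blast
    moreover have "2*i < 2^Suc m" "2*i+1 < 2^Suc m" using i by auto
    ultimately show ?thesis using i by blast
  next
    fix n j assume "n < m" "j < 2^n" "t \<in> Ps n j"
    then show ?thesis by (intro disjI2) (auto intro: less_SucI)
  qed
qed


context ctx
begin

lemma near_zero:
  assumes t: "0 \<le> t" "t < 2" and e: "e > 0"
  shows "\<exists>z. IS f {..<z} = 0 \<and> \<bar>z - t\<bar> < e"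
proof -
  obtain k where k: "(1/2::real)^k < e" using real_arch_pow_inv[OF e, of "1/2"] by auto
  have pk: "(1/2::real)^k = 1 / 2^k" by (simp add: power_one_over)
  show ?thesis
  proof (cases "t < 1")
    case True
    obtain i where i: "i < 2^k" "0 + real i * (1 - 0) / 2^k \<le> t" "t < 0 + (real i + 1) * (1 - 0) / 2^k"
      using approx_grid[of 0 1 t k] True t by auto
    have "IS f {..<real i / 2^k} = 0" using Z1[of i k] i(1) by simp
    moreover have "\<bar>real i / 2^k - t\<bar> < e"
    proof -
      have h: "(real i + 1) * (1 - 0) / 2^k = real i / 2^k + 1 / 2^k" by (simp add: add_divide_distrib)
      have "t - real i / 2^k < 1 / 2^k" using i(3) h by linarith
      then show ?thesis using i(2) k pk by simp
    qed
    ultimately show ?thesis by blast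
  next
    case False
    then have t1: "1 \<le> t" by simp
    from descent[OF t1 t(2), of k] show ?thesis
    proof (elim disjE exE conjE)
      fix i assume i: "i < 2^k" and tD: "t \<in> Ds k i"
      have "IS f {..<LL k i} = 0" using Z2[OF i] .
      moreover have "\<bar>LL k i - t\<bar> < e"
      proof -
        have "(1::real) * 2^k \<le> real (k+1) * 2^k" by (intro mult_right_mono) auto
        then have "dd k \<le> 1 / 2^k" unfolding dd_def by (intro divide_left_mono) auto
        then show ?thesis using tD k pk by (auto simp: Ds_def)
      qed
      ultimately show ?thesis by blast
    next
      fix n j assume j: "j < 2^n" and tP: "t \<in> Ps n j"
      have Pe: "Ps n j = {pa n j ..< pa n j + pw n}" by (simp add: Ps_def pa_def pw_def)
      obtain i where i: "i < 2^k" "pa n j + real i * (pa n j + pw n - pa n j) / 2^k \<le> t"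
          "t < pa n j + (real i + 1) * (pa n j + pw n - pa n j) / 2^k"
        using approx_grid[of "pa n j" "pa n j + pw n" t k] tP pw_pos[of n] unfolding Pe by auto
      have "IS f {..<pa n j + real i * pw n / 2^k} = 0" using Z3[OF j, of i k] i(1) by simp
      moreover have "\<bar>pa n j + real i * pw n / 2^k - t\<bar> < e"
      proof -
        have "(1::real) * 1 \<le> real (n+1) * 2^n" by (intro mult_mono) auto
        then have "dd n \<le> 1" unfolding dd_def by simp
        then have "pw n \<le> 1" using dd_pos[of "Suc n"] by (simp add: pw_def)
        then have "pw n / 2^k \<le> 1 / 2^k" by (simp add: divide_right_mono)
        moreover have "t - (pa n j + real i * pw n / 2^k) < pw n / 2^k"
        proof -
          have h: "(real i + 1) * (pa n j + pw n - pa n j) / 2^k = real i * pw n / 2^k + pw n / 2^k"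
            by (simp add: algebra_simps add_divide_distrib)
          show ?thesis using i(3) h by linarith
        qed
        moreover have "pa n j + real i * pw n / 2^k \<le> t" using i(2) by simp
        ultimately show ?thesis using k pk by simp
      qed
      ultimately show ?thesis by blast
    qed
  qed
qed

lemma G_lim:
  assumes z: "z \<longlonglongrightarrow> t"
  shows "(\<lambda>k. IS f {..<z k}) \<longlonglongrightarrow> IS f {..<t}"
  unfolding IS_def
proof (rule integral_dominated_convergence[where w="\<lambda>x. \<bar>f x\<bar>"])
  show "(\<lambda>x. f x * indicator {..<t} x) \<in> borel_measurable MM"
    using ind_int_f[OF _ fint, of "{..<t}"] by (intro borel_measurable_integrable) simp
  show "(\<lambda>x. f x * indicator {..<z k} x) \<in> borel_measurable MM" for k
    using ind_int_f[OF _ fint, of "{..<z k}"] by (intro borel_measurable_integrable) simp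
  show "integrable MM (\<lambda>x. \<bar>f x\<bar>)" using fint by (rule integrable_abs)
  show "AE x in MM. norm (f x * indicator {..<z k} x) \<le> \<bar>f x\<bar>" for k
    by (intro AE_I2) (auto simp: indicator_def)
  have "AE x in lebesgue. x \<noteq> t" by (rule AE_completion[OF AE_lborel_singleton])
  then have ae: "AE x in MM. x \<noteq> t"
    by (subst AE_restrict_space_iff) auto
  show "AE x in MM. (\<lambda>k. f x * indicator {..<z k} x) \<longlonglongrightarrow> f x * indicator {..<t} x"
    using ae
  proof eventually_elim
    case (elim x)
    show ?case
    proof (cases "x < t")
      case True
      then have "eventually (\<lambda>k. x < z k) sequentially" using order_tendstoD(1)[OF z] by blast
      then have "eventually (\<lambda>k. f x * indicator {..<z k} x = f x * indicator {..<t} x) sequentially"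
        by eventually_elim (use True in auto)
      then show ?thesis by (rule tendsto_eventually)
    next
      case False
      then have "t < x" using elim by simp
      then have "eventually (\<lambda>k. z k < x) sequentially" using order_tendstoD(2)[OF z] by blast
      then have "eventually (\<lambda>k. f x * indicator {..<z k} x = f x * indicator {..<t} x) sequentially"
        by eventually_elim (use False in auto)
      then show ?thesis by (rule tendsto_eventually)
    qed
  qed
qed

lemma G_zero: "IS f {..<t} = 0"
proof (cases "t \<le> 0")
  case True
  then show ?thesis by (rule IS_neg)
next
  case False
  show ?thesis
  proof (cases "t \<ge> 2")
    case True
    then have "{..<t} \<inter> Om = ns (nodeOf [])" using ns_root by auto
    then show ?thesis using IS_Om[of f "{..<t}"] nodes[of "[]"] by simp
  next
    case False2: False
    have "\<forall>k::nat. \<exists>z. IS f {..<z} = 0 \<and> \<bar>z - t\<bar> < 1 / real (Suc k)"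
      using near_zero[of t] False False2 by simp
    then obtain z where z: "\<And>k. IS f {..<z k} = 0 \<and> \<bar>z k - t\<bar> < 1 / real (Suc k)" by metis
    have "z \<longlonglongrightarrow> t"
    proof (rule LIMSEQ_I)
      fix r :: real assume r: "r > 0"
      obtain n where n: "inverse (real (Suc n)) < r" using reals_Archimedean[OF r] by blast
      show "\<exists>no. \<forall>k\<ge>no. norm (z k - t) < r"
      proof (intro exI allI impI)
        fix k assume "n \<le> k"
        then have "1 / real (Suc k) \<le> 1 / real (Suc n)" by (simp add: frac_le)
        then show "norm (z k - t) < r" using z[of k] n by (simp add: inverse_eq_divide)
      qed
    qed
    from G_lim[OF this] have "(\<lambda>k. IS f {..<z k}) \<longlonglongrightarrow> IS f {..<t}" .
    moreover have "(\<lambda>k. IS f {..<z k}) = (\<lambda>k. 0)" using z by auto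
    ultimately show ?thesis using LIMSEQ_unique tendsto_const by metis
  qed
qed

lemma f_zero: "AE x in MM. f x = 0"
  by (rule final_zero[OF fint]) (use G_zero in \<open>simp add: IS_def\<close>)

end


definition st :: "bool list \<Rightarrow> nat" where
  "st p = (case nodeOf p of Prim n j \<Rightarrow> 8 * length p | _ \<Rightarrow> length p)"

lemma st_ge: "length p \<le> st p"
  by (cases "nodeOf p") (auto simp: st_def)

lemma finite_len: "finite {p::bool list. length p \<le> t}"
  using finite_lists_length_le[of "UNIV :: bool set" t] by simp

definition MX :: "nat \<Rightarrow> nat" where "MX t = Max (to_nat ` {p::bool list. length p \<le> t})"
definition GG :: "nat \<Rightarrow> nat" where "GG t = (\<Sum>i<t. MX i + 1)"
definition key :: "bool list \<Rightarrow> nat" where "key p = GG (st p) + to_nat p"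

lemma to_nat_le: "to_nat p \<le> MX (st p)"
  unfolding MX_def using st_ge[of p] finite_len[of "st p"] by (intro Max_ge) auto

lemma GG_mono: "a \<le> b \<Longrightarrow> GG a \<le> GG b"
  unfolding GG_def by (intro sum_mono2) auto

lemma GG_Suc: "GG (Suc a) = GG a + MX a + 1"
  by (simp add: GG_def)

lemma key_lt: "st p < st q \<Longrightarrow> key p < key q"
proof -
  assume "st p < st q"
  then have "GG (Suc (st p)) \<le> GG (st q)" by (intro GG_mono) simp
  moreover have "key p < GG (Suc (st p))" using to_nat_le[of p] by (simp add: key_def GG_Suc)
  ultimately show ?thesis by (simp add: key_def)
qed

lemma key_inj: "inj key"
proof (rule injI)
  fix p q assume k: "key p = key q"
  show "p = q"
  proof (cases "st p = st q")
    case True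
    then have "to_nat p = to_nat q" using k by (simp add: key_def)
    then show ?thesis by simp
  next
    case False
    then have "st p < st q \<or> st q < st p" by auto
    then have "key p < key q \<or> key q < key p" using key_lt by blast
    then show ?thesis using k by simp
  qed
qed

lemma inf_range_key: "infinite (range key)"
proof
  assume "finite (range key)"
  from finite_imageD[OF this] key_inj have "finite (UNIV :: bool list set)" by simp
  then show False using infinite_UNIV_listI by blast
qed

definition e :: "nat \<Rightarrow> bool list" where "e k = inv key (enumerate (range key) k)"

lemma key_e: "key (e k) = enumerate (range key) k"
  unfolding e_def using enumerate_in_set[OF inf_range_key] by (simp add: f_inv_into_f)

lemma e_inj: "e k = e k' \<Longrightarrow> k = k'"
proof -
  assume "e k = e k'"
  then have "enumerate (range key) k = enumerate (range key) k'" using key_e by metis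
  then show "k = k'" using inj_enumerate[OF inf_range_key] by (simp add: inj_eq)
qed

lemma e_surj: "\<exists>k. e k = p"
proof -
  obtain k where "enumerate (range key) k = key p"
    using enumerate_Ex[OF inf_range_key, of "key p"] by auto
  then have "key (e k) = key p" using key_e by simp
  then show ?thesis using key_inj by (auto dest: injD)
qed

lemma e_mono: "k \<le> k' \<Longrightarrow> st (e k) \<le> st (e k')"
proof (rule ccontr)
  assume kk: "k \<le> k'" and "\<not> st (e k) \<le> st (e k')"
  then have "st (e k') < st (e k)" by simp
  then have "key (e k') < key (e k)" by (rule key_lt)
  then have "enumerate (range key) k' < enumerate (range key) k" by (simp add: key_e)
  then have "k' < k" using inf_range_key by simp
  then show False using kk by simp
qed

lemma st_tendsto: "filterlim (\<lambda>N. st (e N)) at_top sequentially"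
proof (subst filterlim_at_top, intro allI)
  fix S :: nat
  obtain p :: "bool list" where p: "length p = S" using Ex_list_of_length by blast
  obtain k0 where k0: "e k0 = p" using e_surj by blast
  have "S \<le> st (e k0)" using st_ge[of p] p k0 by simp
  have "\<forall>N\<ge>k0. S \<le> st (e N)"
  proof (intro allI impI)
    fix N assume "k0 \<le> N"
    then have "st (e k0) \<le> st (e N)" by (rule e_mono)
    then show "S \<le> st (e N)" using \<open>S \<le> st (e k0)\<close> by simp
  qed
  then show "eventually (\<lambda>N. S \<le> st (e N)) sequentially"
    unfolding eventually_sequentially by blast
qed


definition U :: "nat \<Rightarrow> real \<Rightarrow> real" where
  "U k = (if k = 1 then (\<lambda>x. 1 / sqrt 2) else hf (nodeOf (e (k - 2))))"

lemma U_ge2: "k \<ge> 2 \<Longrightarrow> U k = hf (nodeOf (e (k - 2)))"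
  by (simp add: U_def)

lemma measure_MM_Om: "measure MM Om = 2"
  by (subst measure_MM) auto

lemma hf_L2: "hf v \<in> L2_02"
  unfolding L2_02_def
proof (intro CollectI conjI)
  show "hf v \<in> borel_measurable MM" by (rule hf_meas)
  show "integrable MM (\<lambda>x. (hf v x)\<^sup>2)"
  proof (rule bounded_integrable[where B="(c1 v + c2 v)\<^sup>2"])
    show "(\<lambda>x. (hf v x)\<^sup>2) \<in> borel_measurable MM" using hf_meas by measurable
    show "\<bar>(hf v x)\<^sup>2\<bar> \<le> (c1 v + c2 v)\<^sup>2" for x
      using power_mono[OF hf_bound[of v x] abs_ge_zero, of 2] by simp
  qed
qed

lemma const_L2: "(\<lambda>x. 1 / sqrt 2) \<in> L2_02"
  unfolding L2_02_def using finite_measure.integrable_const[OF fin_MM] by simp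

lemma inner_11: "inner02 (U 1) (U 1) = 1"
proof -
  have "inner02 (U 1) (U 1) = integral\<^sup>L MM (\<lambda>x. 1 / 2)"
    by (simp add: inner02_def U_def)
  also have "\<dots> = 1" using measure_MM_Om by simp
  finally show ?thesis .
qed

lemma inner_1k: "inner02 (U 1) (hf (nodeOf p)) = 0" "inner02 (hf (nodeOf p)) (U 1) = 0"
  using hf_integral[OF valid_nodeOf, of p]
  by (simp_all add: inner02_def U_def)

lemma orthonormal: "i \<ge> 1 \<Longrightarrow> j \<ge> 1 \<Longrightarrow> inner02 (U i) (U j) = (if i = j then 1 else 0)"
proof -
  assume i: "i \<ge> 1" and j: "j \<ge> 1"
  show ?thesis
  proof (cases "i = 1")
    case True
    then show ?thesis
    proof (cases "j = 1")
      case True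
      then show ?thesis using \<open>i = 1\<close> inner_11 by simp
    next
      case False
      then show ?thesis using \<open>i = 1\<close> j U_ge2[of j] inner_1k(1) by simp
    qed
  next
    case False
    then have i2: "i \<ge> 2" using i by simp
    show ?thesis
    proof (cases "j = 1")
      case True
      then show ?thesis using i2 U_ge2[of i] inner_1k(2) by simp
    next
      case False
      then have j2: "j \<ge> 2" using j by simp
      show ?thesis
      proof (cases "i = j")
        case True
        then show ?thesis using U_ge2[OF i2] hf_sq[OF valid_nodeOf] by (simp add: inner02_def)
      next
        case False
        then have "e (i - 2) \<noteq> e (j - 2)" using i2 j2 e_inj by fastforce
        then show ?thesis using U_ge2[OF i2] U_ge2[OF j2] hf_orth_paths False by (simp add: inner02_def)
      qed
    qed
  qed
qed

lemma complete:
  assumes fL: "f \<in> L2_02" and orth: "\<forall>k\<ge>1. inner02 f (U k) = 0"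
  shows "AE x in I02. f x = 0"
proof -
  have fm: "f \<in> borel_measurable MM" and fsq: "integrable MM (\<lambda>x. (f x)\<^sup>2)"
    using fL by (auto simp: L2_02_def)
  have fint: "integrable MM f" by (rule L2_integrable[OF fm fsq])
  have "inner02 f (U 1) = 0" using orth by simp
  then have "integral\<^sup>L MM (\<lambda>x. f x * (1 / sqrt 2)) = 0" by (simp add: inner02_def U_def)
  then have z: "integral\<^sup>L MM f = 0" by simp
  have o: "integral\<^sup>L MM (\<lambda>x. f x * hf (nodeOf p) x) = 0" for p
  proof -
    obtain k where k: "e k = p" using e_surj by blast
    have "inner02 f (U (k + 2)) = 0" using orth by simp
    then show ?thesis using U_ge2[of "k+2"] k by (simp add: inner02_def)
  qed
  have nodes: "IS f (ns (nodeOf p)) = 0" for p by (rule IS_all_nodes[OF fint z o])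
  interpret ctx f using fm fsq nodes by unfold_locales
  show ?thesis by (rule f_zero)
qed

lemma ONB: "ONB02 U"
  unfolding ONB02_def
proof (intro conjI allI impI ballI)
  fix k :: nat assume "k \<ge> 1"
  then show "U k \<in> L2_02"
    by (cases "k = 1") (auto simp: U_def const_L2 hf_L2)
next
  fix i j :: nat assume "i \<ge> 1" "j \<ge> 1"
  then show "inner02 (U i) (U j) = (if i = j then 1 else 0)" by (rule orthonormal)
next
  fix f assume "f \<in> L2_02" "\<forall>k\<ge>1. inner02 f (U k) = 0"
  then show "AE x in I02. f x = 0" by (rule complete)
qed


lemma meas_le_ivl: "A \<subseteq> {a..b::real} \<Longrightarrow> A \<in> sets lebesgue \<Longrightarrow> a \<le> b \<Longrightarrow> measure lebesgue A \<le> b - a"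
  using measure_mono_fmeasurable[of A "{a..b}" lebesgue] lmeasurable_cbox[of a b] by simp

lemma ns_Sub: "valid (Sub a b) \<Longrightarrow> ns (Sub a b) = {a..<b}"
  by (auto simp: ns_def)

lemma x_notin_Sub: "x < 1 \<Longrightarrow> valid (Sub a b) \<Longrightarrow> x \<notin> ns (Sub a b)"
  by (auto simp: ns_def)

lemma hf_sq_bound: "valid v \<Longrightarrow> (hf v x)\<^sup>2 \<le> max (1 / mA v) (1 / mB v)"
proof -
  assume v: "valid v"
  note p = mAB_pos[OF v]
  have c1: "(c1 v)\<^sup>2 \<le> 1 / mA v"
  proof -
    have "(c1 v)\<^sup>2 = mB v / (mA v + mB v) * (1 / mA v)" using c_sq[OF v] by simp
    also have "\<dots> \<le> 1 * (1 / mA v)" using p by (intro mult_right_mono) auto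
    finally show ?thesis by simp
  qed
  have c2: "(c2 v)\<^sup>2 \<le> 1 / mB v"
  proof -
    have "(c2 v)\<^sup>2 = mA v / (mA v + mB v) * (1 / mB v)" using c_sq[OF v] by simp
    also have "\<dots> \<le> 1 * (1 / mB v)" using p by (intro mult_right_mono) auto
    finally show ?thesis by simp
  qed
  have "hf v x = c1 v \<or> hf v x = - c2 v \<or> hf v x = 0"
    using ns_child_disj[OF v] by (auto simp: hf_def indicator_def)
  moreover have "0 \<le> 1 / mA v" using p by simp
  ultimately show ?thesis using c1 c2 p by (auto simp: max_def)
qed

lemma prim_bound:
  assumes "valid (Prim n j)"
  shows "(hf (Prim n j) x)\<^sup>2 \<le> 2^(n+1)"
proof -
  have j: "j < 2^n" using assms by simp
  have a: "2*j < 2^Suc n" "2*j+1 < 2^Suc n" using j by auto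
  have lb: "measure MM (ns (Main (Suc n) i)) \<ge> 1 / 2^Suc n" if i: "i < 2^Suc n" for i
  proof -
    from Js_open[OF i] have o: "{real i / 2^Suc n <..< (real i + 1) / 2^Suc n} \<subseteq> ns (Main (Suc n) i)"
      and b: "real i / 2^Suc n < (real i + 1) / 2^Suc n" "0 \<le> real i / 2^Suc n" "(real i + 1) / 2^Suc n \<le> 2"
      by auto
    have "measure MM {real i / 2^Suc n <..< (real i + 1) / 2^Suc n} \<le> measure MM (ns (Main (Suc n) i))"
      using o ns_sets by (intro finite_measure.finite_measure_mono[OF fin_MM])
    moreover have "measure MM {real i / 2^Suc n <..< (real i + 1) / 2^Suc n} = 1 / 2^Suc n"
    proof -
      have "(real i + 1) / 2^Suc n - real i / 2^Suc n = 1 / 2^Suc n"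
        by (simp add: diff_divide_distrib[symmetric])
      then show ?thesis using b by (subst measure_MM_Ioo) auto
    qed
    ultimately show ?thesis by simp
  qed
  have "mA (Prim n j) \<ge> 1 / 2^Suc n" using lb[OF a(1)] by (simp add: mA_def)
  then have "1 / mA (Prim n j) \<le> 1 / (1 / 2^Suc n)"
    using mAB_pos[OF assms] by (intro divide_left_mono) auto
  then have A: "1 / mA (Prim n j) \<le> 2^Suc n" by simp
  have "mB (Prim n j) \<ge> 1 / 2^Suc n" using lb[OF a(2)] by (simp add: mB_def)
  then have "1 / mB (Prim n j) \<le> 1 / (1 / 2^Suc n)"
    using mAB_pos[OF assms] by (intro divide_left_mono) auto
  then have B: "1 / mB (Prim n j) \<le> 2^Suc n" by simp
  show ?thesis using hf_sq_bound[OF assms, of x] A B by simp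
qed


lemma pw_eq: "pw n = 1 / ((real n + 1) * (real n + 2) * 2^n)"
proof -
  have "pw n = 1 / (real (n+1) * 2^n) - 1 / (real (n+2) * 2^n)"
    unfolding pw_def using dd_Suc_eq[of n] by (simp add: dd_def)
  also have "\<dots> = 1 / ((real n + 1) * (real n + 2) * 2^n)"
    by (simp add: divide_simps) (simp add: algebra_simps)?
  finally show ?thesis .
qed

lemma alg1: fixes a t :: real assumes "a > 0" "t > 0"
  shows "1 / (a * t) / ((2 / t) * (2 / t)) = t / (4 * a)"
  using assms by (simp add: divide_simps) (simp add: algebra_simps)?

lemma alg2: "1 / ((real n + 1) * (real n + 2) * 2^n) / ((2 / 2^n) * (2 / 2^n)) = (2::real)^n / (4 * ((real n + 1) * (real n + 2)))"
  using alg1[of "(real n + 1) * (real n + 2)" "2^n"] by simp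

lemma main_c1:
  assumes j: "j < 2^n"
  shows "(c1 (Main n j))\<^sup>2 \<ge> 2^n / (4 * ((real n + 1) * (real n + 2)))"
proof -
  let ?v = "Main n j"
  have v: "valid ?v" using j by simp
  note p = mAB_pos[OF v]
  have vs: "valid (Sub (LL n j + 2 * dd (Suc n)) (LL n j + dd n))"
    using valid_child[OF v, of False] by simp
  have mB: "mB ?v = pw n"
  proof -
    have "mB ?v = measure MM {LL n j + 2 * dd (Suc n) ..< LL n j + dd n}"
      unfolding mB_def using ns_Sub[OF vs] by simp
    also have "\<dots> = pw n"
      using vs by (subst measure_MM) (auto simp: pw_def)
    finally show ?thesis .
  qed
  have S: "mA ?v + mB ?v = measure MM (ns ?v)"
    unfolding mA_def mB_def ns_child_un[OF v, symmetric]
    using ns_child_disj[OF v] ns_sets emeasure_MM_fin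
    by (intro measure_Union[symmetric]) (auto simp: less_top)
  have Sle: "measure MM (ns ?v) \<le> 2 / 2^n"
  proof -
    have Dsub: "Ds n j \<subseteq> Om" using Ds_sub[OF j] by auto
    have e: "ns ?v = (Js n j \<inter> Om) \<union> Ds n j" using Dsub by (auto simp: ns_def)
    have JM: "Js n j \<inter> Om \<in> sets MM" by (intro sets_MM) (auto simp: Js_def)
    have DM: "Ds n j \<in> sets MM" using Dsub by (intro sets_MM) (auto simp: Ds_def)
    have "measure MM (ns ?v) \<le> measure MM (Js n j \<inter> Om) + measure MM (Ds n j)"
      unfolding e using JM DM emeasure_MM_fin by (intro measure_subadditive) (auto simp: less_top)
    moreover have "measure MM (Js n j \<inter> Om) \<le> 1 / 2^n"
    proof -
      have "measure MM (Js n j \<inter> Om) = measure lebesgue (Js n j \<inter> Om)"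
        by (subst measure_MM) (auto simp: Js_def)
      also have "\<dots> \<le> (real j + 1) / 2^n - real j / 2^n"
        by (rule meas_le_ivl) (auto simp: Js_def divide_right_mono)
      also have "\<dots> = 1 / 2^n" by (simp add: diff_divide_distrib[symmetric])
      finally show ?thesis .
    qed
    moreover have "measure MM (Ds n j) = dd n"
      using Dsub dd_pos[of n] by (subst measure_MM) (auto simp: Ds_def)
    moreover have "dd n \<le> 1 / 2^n"
    proof -
      have "(1::real) * 2^n \<le> real (n+1) * 2^n" by (intro mult_right_mono) auto
      then show ?thesis unfolding dd_def by (intro divide_left_mono) auto
    qed
    ultimately have "measure MM (ns ?v) \<le> 1 / 2^n + 1 / 2^n" by linarith
    then show ?thesis by simp
  qed
  have "(c1 ?v)\<^sup>2 = mB ?v / (mA ?v * (mA ?v + mB ?v))" using c_sq[OF v] by simp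
  also have "\<dots> \<ge> mB ?v / ((mA ?v + mB ?v) * (mA ?v + mB ?v))"
    using p by (intro divide_left_mono mult_right_mono) auto
  finally have F1: "(c1 ?v)\<^sup>2 \<ge> mB ?v / ((mA ?v + mB ?v) * (mA ?v + mB ?v))" .
  have F2: "mB ?v / ((mA ?v + mB ?v) * (mA ?v + mB ?v)) \<ge> pw n / ((2 / 2^n) * (2 / 2^n))"
  proof -
    have S2: "(mA ?v + mB ?v) * (mA ?v + mB ?v) \<le> (2 / 2^n) * (2 / 2^n)"
      using p S Sle by (intro mult_mono) auto
    have "mB ?v / ((2 / 2^n) * (2 / 2^n)) \<le> mB ?v / ((mA ?v + mB ?v) * (mA ?v + mB ?v))"
      using p by (intro divide_left_mono S2) auto
    then show ?thesis using mB by simp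
  qed
  have F3: "pw n / ((2 / 2^n) * (2 / 2^n)) = 2^n / (4 * ((real n + 1) * (real n + 2)))"
    unfolding pw_eq by (rule alg2)
  show ?thesis using F1 F2 F3 by linarith
qed


locale ptx =
  fixes x :: real
  assumes x0: "0 < x" and x1: "x < 1"
begin

lemma hf_x_main: "j < 2^n \<Longrightarrow> hf (Main n j) x = c1 (Main n j) * indicator (ns (Prim n j)) x"
proof -
  assume j: "j < 2^n"
  have vs: "valid (Sub (LL n j + 2 * dd (Suc n)) (LL n j + dd n))"
    using valid_child[of "Main n j" False] j by simp
  have "x \<notin> ns (Sub (LL n j + 2 * dd (Suc n)) (LL n j + dd n))"
    by (rule x_notin_Sub[OF x1 vs])
  then show ?thesis by (simp add: hf_def)
qed

lemma neg_nonprim: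
  assumes np: "\<forall>n j. nodeOf p \<noteq> Prim n j"
  shows "negpart (hf (nodeOf p)) x = 0"
proof (cases "nodeOf p")
  case (Main n j)
  then have j: "j < 2^n" using valid_nodeOf[of p] by simp
  have "hf (nodeOf p) x \<ge> 0" using Main hf_x_main[OF j] c_nonneg by (simp add: indicator_def)
  then show ?thesis by (simp add: negpart_def)
next
  case (Prim n j)
  then show ?thesis using np by simp
next
  case (Sub a b)
  then have "valid (Sub a b)" using valid_nodeOf[of p] by simp
  then have "x \<notin> ns (nodeOf p)" using Sub x_notin_Sub[OF x1] by simp
  then have "hf (nodeOf p) x = 0" by (rule hf_outside[OF valid_nodeOf])
  then show ?thesis by (simp add: negpart_def)
qed

lemma neg_out: "x \<notin> ns (nodeOf p) \<Longrightarrow> negpart (hf (nodeOf p)) x = 0"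
  using hf_outside[OF valid_nodeOf] by (simp add: negpart_def)

lemma neg_prim_bd:
  assumes P: "nodeOf p = Prim n j"
  shows "(negpart (hf (nodeOf p)) x)\<^sup>2 \<le> 2 ^ length p"
proof -
  have "(negpart (hf (nodeOf p)) x)\<^sup>2 \<le> (hf (nodeOf p) x)\<^sup>2"
    by (auto simp: negpart_def max_def)
  also have "\<dots> \<le> 2^(n+1)" using prim_bound[of n j x] P valid_nodeOf[of p] by simp
  also have "\<dots> \<le> 2 ^ length p"
  proof -
    have "length p = 2*n+1" using length_kind[of p] P by simp
    then show ?thesis by (intro power_increasing) auto
  qed
  finally show ?thesis .
qed

lemma negsum:
  assumes N: "N \<ge> 2"
  shows "(\<Sum>k=1..N. (negpart (U k) x)\<^sup>2) \<le> real (st (e (N-2)) div 8 + 1) * 2^(st (e (N-2)) div 8)"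
proof -
  define s where "s = st (e (N-2))"
  define T where "T k = (negpart (U k) x)\<^sup>2" for k
  define K where "K = {k \<in> {2..N}. (\<exists>n j. nodeOf (e (k-2)) = Prim n j) \<and> x \<in> ns (nodeOf (e (k-2)))}"
  have Ksub: "K \<subseteq> {1..N}" by (auto simp: K_def)
  have zero: "\<forall>k\<in>{1..N} - K. T k = 0"
  proof
    fix k assume k: "k \<in> {1..N} - K"
    show "T k = 0"
    proof (cases "k = 1")
      case True
      then show ?thesis by (simp add: T_def U_def negpart_def)
    next
      case False
      then have k2: "k \<ge> 2" and kn: "k \<notin> K" "k \<le> N" using k by auto
      have "(\<forall>n j. nodeOf (e (k-2)) \<noteq> Prim n j) \<or> x \<notin> ns (nodeOf (e (k-2)))"
        using kn k2 by (auto simp: K_def)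
      then have "negpart (hf (nodeOf (e (k-2)))) x = 0" using neg_nonprim neg_out by blast
      then show ?thesis using U_ge2[OF k2] by (simp add: T_def)
    qed
  qed
  have "sum T {1..N} = sum T K" by (rule sum.mono_neutral_right[OF _ Ksub zero]) simp
  have lenK: "length (e (k-2)) \<le> s div 8 \<and> T k \<le> 2 ^ length (e (k-2))" if kK: "k \<in> K" for k
  proof -
    from kK obtain n j where P: "nodeOf (e (k-2)) = Prim n j" and k2: "k \<ge> 2" "k \<le> N" by (auto simp: K_def)
    have "st (e (k-2)) = 8 * length (e (k-2))" using P by (simp add: st_def)
    moreover have "st (e (k-2)) \<le> s" unfolding s_def using k2 by (intro e_mono) simp
    ultimately have "length (e (k-2)) \<le> s div 8" by simp
    moreover have "T k \<le> 2 ^ length (e (k-2))"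
      using neg_prim_bd[OF P] U_ge2[OF k2(1)] by (simp add: T_def)
    ultimately show ?thesis by simp
  qed
  have inj: "inj_on (\<lambda>k. length (e (k-2))) K"
  proof (rule inj_onI)
    fix k k' assume kK: "k \<in> K" "k' \<in> K" and len: "length (e (k-2)) = length (e (k'-2))"
    have xin: "x \<in> ns (nodeOf (e (k-2)))" "x \<in> ns (nodeOf (e (k'-2)))" using kK by (auto simp: K_def)
    have "e (k-2) = e (k'-2)"
    proof (rule ccontr)
      assume "e (k-2) \<noteq> e (k'-2)"
      from same_length_disj[OF this len] xin show False by blast
    qed
    then have "k - 2 = k' - 2" by (rule e_inj)
    moreover have "k \<ge> 2" "k' \<ge> 2" using kK by (auto simp: K_def)
    ultimately show "k = k'" by simp
  qed
  have img: "(\<lambda>k. length (e (k-2))) ` K \<subseteq> {..s div 8}" using lenK by auto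
  have card: "card K \<le> s div 8 + 1"
    using card_inj_on_le[OF inj img] by simp
  have "sum T K \<le> real (card K) * 2^(s div 8)"
  proof (rule sum_bounded_above)
    fix k assume "k \<in> K"
    from lenK[OF this] have "T k \<le> 2 ^ length (e (k-2))" "length (e (k-2)) \<le> s div 8" by auto
    then show "T k \<le> 2^(s div 8)"
      by (meson order_trans one_le_numeral power_increasing)
  qed
  also have "\<dots> \<le> real (s div 8 + 1) * 2^(s div 8)"
    using card by (intro mult_right_mono) auto
  finally show ?thesis using \<open>sum T {1..N} = sum T K\<close> by (simp add: T_def s_def)
qed

lemma possum:
  assumes N: "N \<ge> 2" and s1: "st (e (N-2)) \<ge> 1"
  shows "(\<Sum>k=1..N. (pospart (U k) x)\<^sup>2) \<ge>
     2^((st (e (N-2)) - 1) div 2) / (4 * ((real ((st (e (N-2)) - 1) div 2) + 1) * (real ((st (e (N-2)) - 1) div 2) + 2)))"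
proof -
  define s where "s = st (e (N-2))"
  define M where "M = (s - 1) div 2"
  define j where "j = nat \<lfloor>x * 2^M\<rfloor>"
  have fl0: "0 \<le> \<lfloor>x * 2^M\<rfloor>" using x0 by simp
  have rj: "real j = of_int \<lfloor>x * 2^M\<rfloor>" using fl0 by (simp add: j_def)
  have jx: "real j \<le> x * 2^M" "x * 2^M < real j + 1" using rj by linarith+
  have "x * 2^M < 2^M" using x1 by simp
  then have "real j < 2^M" using jx by linarith
  then have jM: "j < 2^M" by (metis of_nat_less_iff of_nat_numeral of_nat_power)
  have xJ: "x \<in> Js M j"
    unfolding Js_def using jx by (simp add: field_simps)
  obtain q where q: "nodeOf q = Main M j" using reach_Main[OF jM] by blast
  have lq: "length q = 2*M" using length_kind[of q] q by simp
  have stq: "st q = 2*M" using q lq by (simp add: st_def)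
  have "2*M < s" using s1 unfolding M_def s_def by linarith
  obtain k0 where k0: "e k0 = q" using e_surj by blast
  have k0N: "k0 \<le> N - 2"
  proof (rule ccontr)
    assume "\<not> k0 \<le> N - 2"
    then have "st (e (N-2)) \<le> st (e k0)" by (intro e_mono) simp
    then show False using stq k0 \<open>2*M < s\<close> by (simp add: s_def)
  qed
  have xP: "x \<in> ns (Prim M j)" using xJ x0 x1 by (auto simp: ns_def)
  have "U (k0+2) x = c1 (Main M j)"
    using U_ge2[of "k0+2"] k0 q hf_x_main[OF jM] xP by simp
  then have pv: "(pospart (U (k0+2)) x)\<^sup>2 = (c1 (Main M j))\<^sup>2"
    using c_nonneg by (simp add: pospart_def)
  have "(pospart (U (k0+2)) x)\<^sup>2 \<le> (\<Sum>k=1..N. (pospart (U k) x)\<^sup>2)"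
    using k0N N by (intro member_le_sum) auto
  then show ?thesis using pv main_c1[OF jM] unfolding s_def[symmetric] M_def[symmetric] by linarith
qed

end


definition Aa :: "nat \<Rightarrow> real" where "Aa s = (real s + 1) * 2 powr (real s / 8)"
definition Bb :: "nat \<Rightarrow> real" where "Bb s = 2 powr (real s / 2 - 1) / (4 * (real s + 2)^2)"

lemma AB_small: "Aa \<in> o(Bb)"
  unfolding Aa_def Bb_def by real_asymp

lemma A_le: "real (s div 8 + 1) * 2^(s div 8) \<le> Aa s"
proof -
  have d: "8 * (s div 8) \<le> s" by simp
  then have "real (s div 8) \<le> real s / 8" by linarith
  then have "(2::real) ^ (s div 8) \<le> 2 powr (real s / 8)"
    by (simp add: powr_realpow[symmetric] powr_mono)
  moreover have "real (s div 8 + 1) \<le> real s + 1" by simp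
  ultimately show ?thesis unfolding Aa_def
    by (intro mult_mono) auto
qed

lemma B_ge:
  assumes "s \<ge> 1"
  shows "Bb s \<le> 2^((s - 1) div 2) / (4 * ((real ((s - 1) div 2) + 1) * (real ((s - 1) div 2) + 2)))"
proof -
  define M where "M = (s - 1) div 2"
  have "2 * M + 2 \<ge> s" using assms unfolding M_def by linarith
  then have "real s / 2 - 1 \<le> real M" by linarith
  then have num: "2 powr (real s / 2 - 1) \<le> 2 ^ M"
    by (simp add: powr_realpow[symmetric] powr_mono)
  have "M \<le> s" unfolding M_def by linarith
  then have den: "(real M + 1) * (real M + 2) \<le> (real s + 2)^2"
    by (simp add: power2_eq_square mult_mono)
  have "2 powr (real s / 2 - 1) / (4 * (real s + 2)^2) \<le> 2 ^ M / (4 * (real s + 2)^2)"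
    using num by (intro divide_right_mono) auto
  also have "\<dots> \<le> 2 ^ M / (4 * ((real M + 1) * (real M + 2)))"
    using den by (intro divide_left_mono mult_left_mono) auto
  finally show ?thesis unfolding Bb_def M_def .
qed

lemma o_main:
  assumes x: "0 < x" "x < 1"
  shows "(\<lambda>n. \<Sum>k=1..n. (negpart (U k) x)\<^sup>2) \<in> o(\<lambda>n. \<Sum>k=1..n. (pospart (U k) x)\<^sup>2)"
proof (rule landau_o.smallI)
  interpret ptx x using x by unfold_locales
  fix c :: real assume c: "c > 0"
  have ev1: "eventually (\<lambda>s. norm (Aa s) \<le> c * norm (Bb s)) at_top"
    by (rule landau_o.smallD[OF AB_small c])
  have sl: "filterlim (\<lambda>N. st (e (N - 2))) at_top sequentially"
    by (rule filterlim_compose[OF st_tendsto filterlim_minus_const_nat_at_top])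
  have ev2: "eventually (\<lambda>N. norm (Aa (st (e (N-2)))) \<le> c * norm (Bb (st (e (N-2))))) sequentially"
    using filterlim_iff[THEN iffD1, OF sl, rule_format, OF ev1] by simp
  have ev3: "eventually (\<lambda>N. st (e (N-2)) \<ge> 1) sequentially"
    using sl by (simp add: filterlim_at_top)
  have ev4: "eventually (\<lambda>N. N \<ge> 2) sequentially" by (rule eventually_ge_at_top)
  show "eventually (\<lambda>N. norm (\<Sum>k=1..N. (negpart (U k) x)\<^sup>2) \<le> c * norm (\<Sum>k=1..N. (pospart (U k) x)\<^sup>2)) sequentially"
    using ev2 ev3 ev4
  proof eventually_elim
    case (elim N)
    define s where "s = st (e (N-2))"
    have s1: "s \<ge> 1" using elim s_def by simp
    have "(\<Sum>k=1..N. (negpart (U k) x)\<^sup>2) \<le> Aa s"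
      using negsum[OF elim(3)] A_le[of s] unfolding s_def by linarith
    also have "\<dots> \<le> c * Bb s"
      using elim(1) unfolding s_def[symmetric] by (simp add: Aa_def Bb_def)
    also have "\<dots> \<le> c * (\<Sum>k=1..N. (pospart (U k) x)\<^sup>2)"
      using B_ge[OF s1] possum[OF elim(3)] s1 c unfolding s_def by (intro mult_left_mono) auto
    finally have le: "(\<Sum>k=1..N. (negpart (U k) x)\<^sup>2) \<le> c * (\<Sum>k=1..N. (pospart (U k) x)\<^sup>2)" .
    have n0: "(\<Sum>k=1..N. (negpart (U k) x)\<^sup>2) \<ge> 0" by (intro sum_nonneg) auto
    have p0: "(\<Sum>k=1..N. (pospart (U k) x)\<^sup>2) \<ge> 0" by (intro sum_nonneg) auto
    show ?case using le n0 p0 by simp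
  qed
qed

theorem mainTheorem9:
  shows "\<exists>U :: nat \<Rightarrow> real \<Rightarrow> real. ONB02 U \<and>
     (\<forall>x\<in>{0<..<1}.
        (\<lambda>n. \<Sum>k=1..n. (negpart (U k) x)\<^sup>2) \<in> o(\<lambda>n. \<Sum>k=1..n. (pospart (U k) x)\<^sup>2))"
  using ONB o_main by auto


end
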